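(* Let $S \geq 1$ and, for $i = 1,\dots,S$, let $\boldsymbol{M}_i \in \mathbb{R}^{m_i \times m_i}$ be symmetric positive definite, let $\boldsymbol{K}_i \in \mathbb{R}^{m_i \times m_i}$ be symmetric positive semidefinite, and let $\boldsymbol{C}_i \in \mathbb{R}^{p \times m_i}$ be signed Boolean matrices such that $[\boldsymbol{C}_1 \ \cdots \ \boldsymbol{C}_S]$ has full row rank $p$. Let $0 \le \gamma \le 1$, $\Delta t > 0$ and $\alpha > 0$, and let $\omega_i^{\max}$ denote the largest eigenvalue of $\boldsymbol{K}_i \boldsymbol{\phi} = \omega \boldsymbol{M}_i \boldsymbol{\phi}$. Assume that either $1/2 \le \gamma \le 1$ (with no further restriction on $\alpha>0$, $\Delta t>0$), or $0 \le \gamma < 1/2$ together with $\alpha \le 1/|\gamma - 1/2|$ and $\Delta t\, \omega_i^{\max} \le \frac{2}{1-2\gamma} - \alpha$ for all $i$. Suppose sequences $\boldsymbol{d}_i^{(n)}, \boldsymbol{v}_i^{(n)} \in \mathbb{R}^{m_i}$ and $\boldsymbol{\lambda}^{(n)} \in \mathbb{R}^p$, $n \geq 0$, satisfy (the Baumgarte stabilized method with zero external forcing): for all $n \ge 0$ and all $i$, $\boldsymbol{M}_i \boldsymbol{v}_i^{(n)} + \boldsymbol{K}_i \boldsymbol{d}_i^{(n)} = \boldsymbol{C}_i^{\mathrm{T}} \boldsymbol{\lambda}^{(n)}$ and $\sum_{i=1}^S \boldsymbol{C}_i \boldsymbol{v}_i^{(n)} + \frac{\alpha}{\Delta t}\sum_{i=1}^S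 \boldsymbol{C}_i \boldsymbol{d}_i^{(n)} = \boldsymbol{0}$; and for all $n \geq 1$, $\boldsymbol{d}_i^{(n)} = \boldsymbol{d}_i^{(n-1)} + \Delta t\left((1-\gamma)\boldsymbol{v}_i^{(n-1)} + \gamma \boldsymbol{v}_i^{(n)}\right)$. Then the sequences $(\boldsymbol{v}_i^{(n)})_n$, $(\boldsymbol{d}_i^{(n+1)} - \boldsymbol{d}_i^{(n)})_n$ ($i=1,\dots,S$), $(\boldsymbol{\lambda}^{(n+1)} - \boldsymbol{\lambda}^{(n)})_n$ and the constraint drift $\left(\sum_{i=1}^S \boldsymbol{C}_i \boldsymbol{d}_i^{(n)}\right)_n$ are all bounded.
   Context: A signed Boolean matrix is a matrix whose entries are in $\{-1,0,+1\}$ and each of whose rows has at most one nonzero entry. A sequence of vectors is bounded if there is a constant $C$ independent of $n$ with $\|\boldsymbol{x}^{(n)}\| < C$ for all $n$. For $\omega_i^{\max} > 0$ the time-step condition reads $\Delta t \le \frac{2}{(1-2\gamma)\omega_i^{\max}} - \frac{\alpha}{\omega_i^{\max}}$. *)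

theory Defs
  imports "Jordan_Normal_Form.DL_Rank"
begin

definition vnorm :: "real vec \<Rightarrow> real" where
  "vnorm x = sqrt (x \<bullet> x)"

definition bounded_seq :: "(nat \<Rightarrow> real vec) \<Rightarrow> bool" where
  "bounded_seq x \<longleftrightarrow> (\<exists>C. \<forall>n. vnorm (x n) < C)"

definition sym_mat :: "real mat \<Rightarrow> bool" where
  "sym_mat A \<longleftrightarrow> transpose_mat A = A"

definition pos_def_mat :: "nat \<Rightarrow> real mat \<Rightarrow> bool" where
  "pos_def_mat n A \<longleftrightarrow> A \<in> carrier_mat n n \<and> sym_mat A \<and>
     (\<forall>x \<in> carrier_vec n. x \<noteq> 0\<^sub>v n \<longrightarrow> x \<bullet> (A *\<^sub>v x) > 0)"

definition pos_semidef_mat :: "nat \<Rightarrow> real mat \<Rightarrow> bool" where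
  "pos_semidef_mat n A \<longleftrightarrow> A \<in> carrier_mat n n \<and> sym_mat A \<and>
     (\<forall>x \<in> carrier_vec n. x \<bullet> (A *\<^sub>v x) \<ge> 0)"

definition signed_boolean_mat :: "real mat \<Rightarrow> bool" where
  "signed_boolean_mat C \<longleftrightarrow>
     (\<forall>r < dim_row C. \<forall>c < dim_col C. C $$ (r,c) \<in> {-1, 0, 1}) \<and>
     (\<forall>r < dim_row C. \<forall>c < dim_col C. \<forall>c' < dim_col C.
        C $$ (r,c) \<noteq> 0 \<longrightarrow> C $$ (r,c') \<noteq> 0 \<longrightarrow> c = c')"

text \<open>Horizontal concatenation [C_0 ... C_{S-1}] of p-row matrices.\<close>
definition block_row :: "nat \<Rightarrow> (nat \<Rightarrow> real mat) \<Rightarrow> nat \<Rightarrow> real mat" where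
  "block_row p C S = transpose_mat (foldr (\<lambda>i A. transpose_mat (C i) @\<^sub>r A) [0..<S] (0\<^sub>m 0 p))"

definition gen_eigenvalues :: "real mat \<Rightarrow> real mat \<Rightarrow> real set" where
  "gen_eigenvalues K M = {\<omega>. \<exists>\<phi> \<in> carrier_vec (dim_row K). \<phi> \<noteq> 0\<^sub>v (dim_row K) \<and>
       K *\<^sub>v \<phi> = \<omega> \<cdot>\<^sub>v (M *\<^sub>v \<phi>)}"

definition omega_max :: "real mat \<Rightarrow> real mat \<Rightarrow> real" where
  "omega_max K M = Max (gen_eigenvalues K M)"

definition vsum :: "nat \<Rightarrow> (nat \<Rightarrow> real vec) \<Rightarrow> nat set \<Rightarrow> real vec" where
  "vsum p f I = vec p (\<lambda>r. \<Sum>i\<in>I. f i $ r)"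

end

theory Submission
  imports Defs "HOL-Analysis.Function_Topology" "HOL-Analysis.L2_Norm" "Jordan_Normal_Form.Char_Poly"
begin


lemma sprod_expand:
  fixes x y :: "real vec"
  assumes "x \<in> carrier_vec n" "y \<in> carrier_vec n"
  shows "x \<bullet> y = (\<Sum>i<n. x $ i * y $ i)"
  using assms unfolding scalar_prod_def by (auto simp: atLeast0LessThan)

lemma mv_index:
  fixes A :: "real mat"
  assumes "A \<in> carrier_mat nr nc" "x \<in> carrier_vec nc" "i < nr"
  shows "(A *\<^sub>v x) $ i = (\<Sum>j<nc. A $$ (i,j) * x $ j)"
  using assms by (auto simp: scalar_prod_def row_def atLeast0LessThan intro!: sum.cong)

lemma bil_expand:
  fixes A :: "real mat"
  assumes "A \<in> carrier_mat nr nc" "x \<in> carrier_vec nc" "y \<in> carrier_vec nr"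
  shows "y \<bullet> (A *\<^sub>v x) = (\<Sum>i<nr. \<Sum>j<nc. y $ i * A $$ (i,j) * x $ j)"
proof -
  have "y \<bullet> (A *\<^sub>v x) = (\<Sum>i<nr. y $ i * (A *\<^sub>v x) $ i)"
    using assms by (intro sprod_expand) auto
  also have "\<dots> = (\<Sum>i<nr. \<Sum>j<nc. y $ i * A $$ (i,j) * x $ j)"
    apply (intro sum.cong refl)
    subgoal for i by (subst mv_index[OF assms(1) assms(2)]) (auto simp: sum_distrib_left mult.assoc)
    done
  finally show ?thesis .
qed

lemma transpose_sprod:
  fixes A :: "real mat"
  assumes "A \<in> carrier_mat nr nc" "x \<in> carrier_vec nc" "y \<in> carrier_vec nr"
  shows "(transpose_mat A *\<^sub>v y) \<bullet> x = y \<bullet> (A *\<^sub>v x)"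
proof -
  have At: "transpose_mat A \<in> carrier_mat nc nr" using assms by auto
  have "(transpose_mat A *\<^sub>v y) \<bullet> x = x \<bullet> (transpose_mat A *\<^sub>v y)"
    using assms At by (intro comm_scalar_prod[of _ nc]) auto
  also have "\<dots> = (\<Sum>j<nc. \<Sum>i<nr. x $ j * A $$ (i,j) * y $ i)"
    using bil_expand[OF At assms(3) assms(2)] assms by (auto intro!: sum.cong)
  also have "\<dots> = (\<Sum>i<nr. \<Sum>j<nc. y $ i * A $$ (i,j) * x $ j)"
    by (subst sum.swap) (auto intro!: sum.cong simp: ac_simps)
  also have "\<dots> = y \<bullet> (A *\<^sub>v x)" using bil_expand[OF assms] by simp
  finally show ?thesis .
qed

lemma sym_bil:
  fixes A :: "real mat"
  assumes "A \<in> carrier_mat n n" "sym_mat A" "x \<in> carrier_vec n" "y \<in> carrier_vec n"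
  shows "y \<bullet> (A *\<^sub>v x) = x \<bullet> (A *\<^sub>v y)"
  using transpose_sprod[OF assms(1) assms(3) assms(4)] assms
  by (metis comm_scalar_prod mult_mat_vec_carrier sym_mat_def)

lemma self_sprod_ge0:
  fixes x :: "real vec"
  shows "x \<bullet> x \<ge> 0"
  unfolding scalar_prod_def by (auto intro: sum_nonneg)

lemma self_sprod_eq0:
  fixes x :: "real vec"
  assumes "x \<in> carrier_vec n" "x \<bullet> x = 0"
  shows "x = 0\<^sub>v n"
proof (rule eq_vecI)
  fix i assume i: "i < dim_vec (0\<^sub>v n)"
  have "(\<Sum>j\<in>{0..<dim_vec x}. x $ j * x $ j) = 0" using assms(2) unfolding scalar_prod_def by simp
  then have "\<forall>j\<in>{0..<dim_vec x}. x $ j * x $ j = 0"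
    by (subst (asm) sum_nonneg_eq_0_iff) auto
  then show "x $ i = 0\<^sub>v n $ i" using i assms(1) by auto
qed (use assms in auto)

definition sph :: "nat \<Rightarrow> (nat \<Rightarrow> real) set" where
  "sph n = {x. (\<forall>i. x i \<in> (if i < n then {-1..1} else {0})) \<and> (\<Sum>i<n. (x i)^2) = 1}"

lemma sph_compact: "compact (sph n)"
proof -
  define B where "B = Pi\<^sub>E UNIV (\<lambda>i::nat. if i < n then {-1..1::real} else {0})"
  have "compactin (product_topology (\<lambda>_. euclidean) UNIV) B"
    unfolding B_def by (subst compactin_PiE) auto
  then have cB: "compact B" by (simp add: euclidean_product_topology)
  have cl: "closed {x::nat\<Rightarrow>real. (\<Sum>i<n. (x i)^2) = 1}"
    by (intro closed_Collect_eq continuous_intros) (auto intro: continuous_on_product_coordinates)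
  have "sph n = B \<inter> {x. (\<Sum>i<n. (x i)^2) = 1}"
  proof -
    have "x \<in> B \<longleftrightarrow> (\<forall>i. x i \<in> (if i < n then {-1..1} else {0}))" for x
      unfolding B_def by (simp add: PiE_iff)
    then show ?thesis unfolding sph_def by blast
  qed
  then show ?thesis using compact_Int_closed[OF cB cl] by simp
qed

lemma sph_vec:
  assumes "x \<in> sph n"
  shows "vec n x \<in> carrier_vec n" "vec n x \<bullet> vec n x = 1"
proof -
  show "vec n x \<in> carrier_vec n" by simp
  have "vec n x \<bullet> vec n x = (\<Sum>i<n. (x i)^2)"
    by (subst sprod_expand[of _ n]) (auto simp: power2_eq_square)
  then show "vec n x \<bullet> vec n x = 1" using assms unfolding sph_def by simp
qed

lemma vec_sph:
  assumes "z \<in> carrier_vec n" "z \<bullet> z = 1"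
  shows "(\<lambda>i. if i < n then z $ i else 0) \<in> sph n"
    "vec n (\<lambda>i. if i < n then z $ i else 0) = z"
proof -
  have s: "(\<Sum>i<n. ((\<lambda>i. if i < n then z $ i else 0) i)^2) = 1"
    using assms sprod_expand[OF assms(1) assms(1)] by (simp add: power2_eq_square)
  have "\<forall>i<n. z $ i \<in> {-1..1}"
  proof (intro allI impI)
    fix i assume i: "i < n"
    have "(z $ i)^2 \<le> (\<Sum>j<n. (z $ j)^2)"
      using i by (intro member_le_sum) auto
    also have "\<dots> = 1" using s by simp
    finally have "(z $ i)^2 \<le> 1^2" by simp
    then have "\<bar>z $ i\<bar> \<le> 1" using abs_le_square_iff by (metis abs_one)
    then show "z $ i \<in> {-1..1}" by auto
  qed
  then show "(\<lambda>i. if i < n then z $ i else 0) \<in> sph n"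
    using s unfolding sph_def by auto
  show "vec n (\<lambda>i. if i < n then z $ i else 0) = z"
    using assms(1) by (intro eq_vecI) auto
qed

lemma sph_nonempty: "n > 0 \<Longrightarrow> sph n \<noteq> {}"
proof -
  assume n: "n > 0"
  have "(\<lambda>i. if i = 0 then 1 else 0) \<in> sph n"
  proof -
    have "(\<Sum>i<n. ((\<lambda>i::nat. if i = 0 then 1 else 0::real) i)^2) = (\<Sum>i<n. if i = 0 then 1 else 0)"
      by (intro sum.cong) auto
    also have "\<dots> = 1" using n by (simp add: sum.delta)
    finally show ?thesis unfolding sph_def using n by auto
  qed
  then show ?thesis by auto
qed

lemma sphere_attain_min:
  fixes f :: "real vec \<Rightarrow> real"
  assumes n: "n > 0" and cont: "continuous_on (sph n) (\<lambda>x. f (vec n x))"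
  shows "\<exists>z\<in>carrier_vec n. z \<bullet> z = 1 \<and> (\<forall>y\<in>carrier_vec n. y \<bullet> y = 1 \<longrightarrow> f z \<le> f y)"
proof -
  obtain x where x: "x \<in> sph n" and min: "\<forall>y\<in>sph n. f (vec n x) \<le> f (vec n y)"
    using continuous_attains_inf[OF sph_compact sph_nonempty[OF n] cont] by blast
  show ?thesis
  proof (intro bexI conjI ballI impI)
    show "vec n x \<in> carrier_vec n" "vec n x \<bullet> vec n x = 1" using sph_vec[OF x] by auto
    fix y :: "real vec" assume y: "y \<in> carrier_vec n" "y \<bullet> y = 1"
    show "f (vec n x) \<le> f y" using min vec_sph[OF y] by metis
  qed
qed


lemma quad_cont:
  fixes A :: "real mat"
  assumes A: "A \<in> carrier_mat n n"
  shows "continuous_on S (\<lambda>x. vec n x \<bullet> (A *\<^sub>v vec n x))"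
proof -
  have "vec n x \<bullet> (A *\<^sub>v vec n x) = (\<Sum>i<n. \<Sum>j<n. x i * A $$ (i,j) * x j)" for x
    by (subst bil_expand[OF A]) auto
  then show ?thesis
    by (simp only:) (intro continuous_intros continuous_on_subset[OF continuous_on_product_coordinates], auto)
qed

lemma smult_sprod_self:
  fixes x :: "real vec"
  assumes "x \<in> carrier_vec n"
  shows "(a \<cdot>\<^sub>v x) \<bullet> (a \<cdot>\<^sub>v x) = a^2 * (x \<bullet> x)"
  using assms by (simp add: power2_eq_square)

lemma homog_min:
  fixes Q :: "real vec \<Rightarrow> real"
  assumes cont: "n > 0 \<Longrightarrow> continuous_on (sph n) (\<lambda>x. Q (vec n x))"
    and hom: "\<forall>x\<in>carrier_vec n. \<forall>a. Q (a \<cdot>\<^sub>v x) = a^2 * Q x"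
    and pos: "\<forall>x\<in>carrier_vec n. x \<noteq> 0\<^sub>v n \<longrightarrow> Q x > 0"
  shows "\<exists>c>0. \<forall>x\<in>carrier_vec n. c * (x \<bullet> x) \<le> Q x"
proof (cases "n = 0")
  case True
  show ?thesis
  proof (intro exI[of _ 1] conjI ballI)
    fix x :: "real vec" assume x: "x \<in> carrier_vec n"
    then have "x \<bullet> x = 0" using True by (simp add: scalar_prod_def)
    moreover have "Q x = 0"
    proof -
      have "x = 0 \<cdot>\<^sub>v x" using x True by (intro eq_vecI) auto
      then show ?thesis using hom x by (metis mult_zero_left power_zero_numeral)
    qed
    ultimately show "1 * (x \<bullet> x) \<le> Q x" by simp
  qed simp
next
  case False
  then have n: "n > 0" by simp
  obtain z where z: "z \<in> carrier_vec n" "z \<bullet> z = 1"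
    and zmin: "\<forall>y\<in>carrier_vec n. y \<bullet> y = 1 \<longrightarrow> Q z \<le> Q y"
    using sphere_attain_min[OF n cont[OF n]] by blast
  have "z \<noteq> 0\<^sub>v n" using z by auto
  then have cpos: "Q z > 0" using pos z by auto
  show ?thesis
  proof (intro exI[of _ "Q z"] conjI ballI)
    show "Q z > 0" by fact
    fix x :: "real vec" assume x: "x \<in> carrier_vec n"
    show "Q z * (x \<bullet> x) \<le> Q x"
    proof (cases "x \<bullet> x = 0")
      case True
      then have "x = 0\<^sub>v n" using self_sprod_eq0 x by blast
      then have "x = 0 \<cdot>\<^sub>v x" using x by (intro eq_vecI) auto
      then have "Q x = 0" using hom x by (metis mult_zero_left power_zero_numeral)
      then show ?thesis using True by simp
    next
      case False
      define s where "s = sqrt (x \<bullet> x)"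
      have xx: "x \<bullet> x > 0" using False self_sprod_ge0[of x] by linarith
      then have s: "s > 0" "s^2 = x \<bullet> x" unfolding s_def by auto
      define y where "y = (1/s) \<cdot>\<^sub>v x"
      have y: "y \<in> carrier_vec n" unfolding y_def using x by simp
      have "y \<bullet> y = (1/s)^2 * (x \<bullet> x)" unfolding y_def by (rule smult_sprod_self[OF x])
      also have "\<dots> = 1" using s xx by (simp add: power_divide)
      finally have "Q z \<le> Q y" using zmin y by blast
      also have "Q y = (1/s)^2 * Q x" unfolding y_def using hom x by blast
      finally have "Q z \<le> Q x / (x \<bullet> x)" using s by (simp add: power_divide)
      then show ?thesis using xx by (simp add: pos_le_divide_eq)
    qed
  qed
qed

lemma pd_coercive:
  assumes "pos_def_mat n M"
  shows "\<exists>c>0. \<forall>x\<in>carrier_vec n. c * (x \<bullet> x) \<le> x \<bullet> (M *\<^sub>v x)"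
proof -
  have M: "M \<in> carrier_mat n n" using assms unfolding pos_def_mat_def by auto
  show ?thesis
  proof (rule homog_min)
    show "continuous_on (sph n) (\<lambda>x. vec n x \<bullet> (M *\<^sub>v vec n x))" by (rule quad_cont[OF M])
    show "\<forall>x\<in>carrier_vec n. \<forall>a. (a \<cdot>\<^sub>v x) \<bullet> (M *\<^sub>v (a \<cdot>\<^sub>v x)) = a^2 * (x \<bullet> (M *\<^sub>v x))"
      using M by (auto simp: mult_mat_vec power2_eq_square)
    show "\<forall>x\<in>carrier_vec n. x \<noteq> 0\<^sub>v n \<longrightarrow> x \<bullet> (M *\<^sub>v x) > 0"
      using assms unfolding pos_def_mat_def by auto
  qed
qed


lemma quad_expand:
  fixes A :: "real mat"
  assumes A: "A \<in> carrier_mat n n" "sym_mat A" and z: "z \<in> carrier_vec n" and y: "y \<in> carrier_vec n"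
  shows "(z + t \<cdot>\<^sub>v y) \<bullet> (A *\<^sub>v (z + t \<cdot>\<^sub>v y)) = z \<bullet> (A *\<^sub>v z) + 2 * t * (y \<bullet> (A *\<^sub>v z)) + t^2 * (y \<bullet> (A *\<^sub>v y))"
proof -
  have s: "z \<bullet> (A *\<^sub>v y) = y \<bullet> (A *\<^sub>v z)" using sym_bil[OF A y z] by simp
  have "A *\<^sub>v (z + t \<cdot>\<^sub>v y) = A *\<^sub>v z + t \<cdot>\<^sub>v (A *\<^sub>v y)"
    using A z y by (simp add: mult_add_distrib_mat_vec[of A n n] mult_mat_vec)
  then have "(z + t \<cdot>\<^sub>v y) \<bullet> (A *\<^sub>v (z + t \<cdot>\<^sub>v y)) =
     z \<bullet> (A *\<^sub>v z) + t * (z \<bullet> (A *\<^sub>v y)) + t * (y \<bullet> (A *\<^sub>v z)) + t * t * (y \<bullet> (A *\<^sub>v y))"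
    using A z y by (simp add: add_scalar_prod_distrib[of _ n] scalar_prod_add_distrib[of _ n] algebra_simps)
  then show ?thesis using s by (simp add: power2_eq_square algebra_simps)
qed

lemma pd_nonsingular:
  assumes "pos_def_mat n M"
  shows "\<exists>B\<in>carrier_mat n n. B * M = 1\<^sub>m n"
proof -
  have M: "M \<in> carrier_mat n n" using assms unfolding pos_def_mat_def by auto
  have "det M \<noteq> 0"
  proof
    assume "det M = 0"
    then obtain v where v: "v \<in> carrier_vec n" "v \<noteq> 0\<^sub>v n" "M *\<^sub>v v = 0\<^sub>v n"
      using det_0_iff_vec_prod_zero_field[OF M] by blast
    then have "v \<bullet> (M *\<^sub>v v) = 0" by simp
    moreover have "v \<bullet> (M *\<^sub>v v) > 0" using assms v unfolding pos_def_mat_def by auto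
    ultimately show False by simp
  qed
  from det_non_zero_imp_unit[OF M this, of "()"]
  show ?thesis unfolding Units_def ring_mat_def by auto
qed

lemma gen_eig_finite:
  assumes "pos_def_mat n M" "K \<in> carrier_mat n n"
  shows "finite (gen_eigenvalues K M)"
proof -
  have M: "M \<in> carrier_mat n n" using assms unfolding pos_def_mat_def by auto
  obtain B where B: "B \<in> carrier_mat n n" "B * M = 1\<^sub>m n" using pd_nonsingular[OF assms(1)] by blast
  have BK: "B * K \<in> carrier_mat n n" using B assms by auto
  have "gen_eigenvalues K M \<subseteq> {x. poly (char_poly (B * K)) x = 0}"
  proof
    fix w assume "w \<in> gen_eigenvalues K M"
    then obtain phi where phi: "phi \<in> carrier_vec n" "phi \<noteq> 0\<^sub>v n" "K *\<^sub>v phi = w \<cdot>\<^sub>v (M *\<^sub>v phi)"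
      unfolding gen_eigenvalues_def using assms by auto
    have "(B * K) *\<^sub>v phi = B *\<^sub>v (K *\<^sub>v phi)" using B assms phi by auto
    also have "\<dots> = w \<cdot>\<^sub>v (B *\<^sub>v (M *\<^sub>v phi))" using phi B M by (simp add: mult_mat_vec[of B n n])
    also have "B *\<^sub>v (M *\<^sub>v phi) = phi" using B M phi
      by (metis assoc_mult_mat_vec one_mult_mat_vec)
    finally have "eigenvector (B * K) phi w" unfolding eigenvector_def using phi BK by auto
    then have "eigenvalue (B * K) w" unfolding eigenvalue_def by auto
    then show "w \<in> {x. poly (char_poly (B * K)) x = 0}"
      using eigenvalue_root_char_poly[OF BK] by auto
  qed
  moreover have "char_poly (B * K) \<noteq> 0"
    using degree_monic_char_poly[OF BK] by auto
  ultimately show ?thesis using poly_roots_finite finite_subset by blast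
qed

lemma rayleigh:
  assumes Mpd: "pos_def_mat n M" and Kp: "pos_semidef_mat n K" and n: "n > 0"
  shows "\<exists>\<mu>\<in>gen_eigenvalues K M. \<forall>x\<in>carrier_vec n. x \<bullet> (K *\<^sub>v x) \<le> \<mu> * (x \<bullet> (M *\<^sub>v x))"
proof -
  have M: "M \<in> carrier_mat n n" "sym_mat M" using Mpd unfolding pos_def_mat_def by auto
  have K: "K \<in> carrier_mat n n" "sym_mat K" using Kp unfolding pos_semidef_mat_def by auto
  have Mpos: "\<And>x. x \<in> carrier_vec n \<Longrightarrow> x \<noteq> 0\<^sub>v n \<Longrightarrow> x \<bullet> (M *\<^sub>v x) > 0"
    using Mpd unfolding pos_def_mat_def by auto
  define f where "f x = - ((x \<bullet> (K *\<^sub>v x)) / (x \<bullet> (M *\<^sub>v x)))" for x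
  have cont: "continuous_on (sph n) (\<lambda>x. f (vec n x))"
    unfolding f_def
  proof (intro continuous_intros quad_cont[OF K(1)] quad_cont[OF M(1)] ballI)
    fix x assume "x \<in> sph n"
    from sph_vec[OF this] have "vec n x \<noteq> 0\<^sub>v n" by auto
    then show "vec n x \<bullet> (M *\<^sub>v vec n x) \<noteq> 0" using Mpos[of "vec n x"] by auto
  qed
  obtain z where z: "z \<in> carrier_vec n" "z \<bullet> z = 1" and zmin: "\<forall>y\<in>carrier_vec n. y \<bullet> y = 1 \<longrightarrow> f z \<le> f y"
    using sphere_attain_min[OF n cont] by blast
  have z0: "z \<noteq> 0\<^sub>v n" using z by auto
  define \<mu> where "\<mu> = (z \<bullet> (K *\<^sub>v z)) / (z \<bullet> (M *\<^sub>v z))"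
  have zM: "z \<bullet> (M *\<^sub>v z) > 0" using Mpos z z0 by auto
  have bound: "x \<bullet> (K *\<^sub>v x) \<le> \<mu> * (x \<bullet> (M *\<^sub>v x))" if x: "x \<in> carrier_vec n" for x
  proof (cases "x = 0\<^sub>v n")
    case True then show ?thesis using K M by (simp add: scalar_prod_def)
  next
    case False
    have xx: "x \<bullet> x > 0" using self_sprod_ge0[of x] self_sprod_eq0[OF x] False by fastforce
    define s where "s = sqrt (x \<bullet> x)"
    have s: "s > 0" "s^2 = x \<bullet> x" unfolding s_def using xx by auto
    define y where "y = (1/s) \<cdot>\<^sub>v x"
    have y: "y \<in> carrier_vec n" unfolding y_def using x by simp
    have "y \<bullet> y = (1/s)^2 * (x \<bullet> x)" unfolding y_def by (rule smult_sprod_self[OF x])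
    also have "\<dots> = 1" using s xx by (simp add: power_divide)
    finally have "f z \<le> f y" using zmin y by blast
    moreover have "y \<bullet> (K *\<^sub>v y) = (1/s)^2 * (x \<bullet> (K *\<^sub>v x))"
      unfolding y_def using x K by (simp add: mult_mat_vec[of K n n] power2_eq_square)
    moreover have "y \<bullet> (M *\<^sub>v y) = (1/s)^2 * (x \<bullet> (M *\<^sub>v x))"
      unfolding y_def using x M by (simp add: mult_mat_vec[of M n n] power2_eq_square)
    ultimately have "(x \<bullet> (K *\<^sub>v x)) / (x \<bullet> (M *\<^sub>v x)) \<le> \<mu>"
      unfolding f_def \<mu>_def using s xx by (simp add: power_divide)
    moreover have "x \<bullet> (M *\<^sub>v x) > 0" using Mpos x False by auto
    ultimately show ?thesis by (simp add: pos_divide_le_eq mult.commute)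
  qed
  define w where "w = K *\<^sub>v z - \<mu> \<cdot>\<^sub>v (M *\<^sub>v z)"
  have w: "w \<in> carrier_vec n" unfolding w_def using K M z by auto
  have q0: "z \<bullet> (K *\<^sub>v z) - \<mu> * (z \<bullet> (M *\<^sub>v z)) = 0" unfolding \<mu>_def using zM by simp
  have yw: "y \<bullet> w = y \<bullet> (K *\<^sub>v z) - \<mu> * (y \<bullet> (M *\<^sub>v z))" if y: "y \<in> carrier_vec n" for y
    unfolding w_def using y K M z by (simp add: scalar_prod_minus_distrib[of _ n])
  have ineq: "2 * t * (w \<bullet> w) + t^2 * (w \<bullet> (K *\<^sub>v w) - \<mu> * (w \<bullet> (M *\<^sub>v w))) \<le> 0" for t
  proof -
    have zt: "z + t \<cdot>\<^sub>v w \<in> carrier_vec n" using z w by simp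
    have "(z + t \<cdot>\<^sub>v w) \<bullet> (K *\<^sub>v (z + t \<cdot>\<^sub>v w)) \<le> \<mu> * ((z + t \<cdot>\<^sub>v w) \<bullet> (M *\<^sub>v (z + t \<cdot>\<^sub>v w)))"
      by (rule bound[OF zt])
    then show ?thesis
      unfolding quad_expand[OF K z(1) w] quad_expand[OF M z(1) w] yw[OF w]
      using q0 by (simp add: algebra_simps)
  qed
  have "w \<bullet> w = 0"
  proof (rule ccontr)
    assume ne: "w \<bullet> w \<noteq> 0"
    then have b: "w \<bullet> w > 0" using self_sprod_ge0[of w] by linarith
    define c where "c = w \<bullet> (K *\<^sub>v w) - \<mu> * (w \<bullet> (M *\<^sub>v w))"
    define t where "t = (w \<bullet> w) / (\<bar>c\<bar> + 1)"
    have t: "t > 0" unfolding t_def using b by (simp add: add_pos_nonneg)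
    have "2 * t * (w \<bullet> w) + t^2 * c \<le> 0" using ineq[of t] unfolding c_def .
    then have "t * (2 * (w \<bullet> w) + t * c) \<le> 0" by (simp add: power2_eq_square algebra_simps)
    then have "2 * (w \<bullet> w) + t * c \<le> 0" using t by (simp add: mult_le_0_iff)
    moreover have "t * c \<ge> - (w \<bullet> w)"
    proof -
      have "t * \<bar>c\<bar> \<le> w \<bullet> w" unfolding t_def using b
        by (simp add: divide_le_eq field_simps)
      moreover have "t * c \<ge> - (t * \<bar>c\<bar>)" using t by (simp add: abs_ge_minus_self mult_left_mono
            flip: mult_minus_right)
      ultimately show ?thesis by linarith
    qed
    ultimately show False using b by linarith
  qed
  then have "w = 0\<^sub>v n" using self_sprod_eq0 w by blast
  then have "K *\<^sub>v z = \<mu> \<cdot>\<^sub>v (M *\<^sub>v z)"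
  proof -
    assume w0: "w = 0\<^sub>v n"
    show ?thesis
    proof (rule eq_vecI)
      fix i assume "i < dim_vec (\<mu> \<cdot>\<^sub>v (M *\<^sub>v z))"
      then have i: "i < n" using M by auto
      have "w $ i = 0" using w0 i by simp
      then show "(K *\<^sub>v z) $ i = (\<mu> \<cdot>\<^sub>v (M *\<^sub>v z)) $ i"
        unfolding w_def using i K M z by simp
    qed (use K M in auto)
  qed
  then have "\<mu> \<in> gen_eigenvalues K M" unfolding gen_eigenvalues_def using z z0 K by auto
  then show ?thesis using bound by blast
qed

lemma omega_max_bound:
  assumes Mpd: "pos_def_mat n M" and Kp: "pos_semidef_mat n K" and x: "x \<in> carrier_vec n"
  shows "x \<bullet> (K *\<^sub>v x) \<le> omega_max K M * (x \<bullet> (M *\<^sub>v x))"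
proof (cases "n = 0")
  case True
  then show ?thesis using Mpd Kp x by (simp add: scalar_prod_def pos_def_mat_def pos_semidef_mat_def)
next
  case False
  obtain \<mu> where mu: "\<mu> \<in> gen_eigenvalues K M" and b: "x \<bullet> (K *\<^sub>v x) \<le> \<mu> * (x \<bullet> (M *\<^sub>v x))"
    using rayleigh[OF Mpd Kp] False x by blast
  have "finite (gen_eigenvalues K M)" using gen_eig_finite[OF Mpd] Kp unfolding pos_semidef_mat_def by auto
  then have "\<mu> \<le> omega_max K M" unfolding omega_max_def using mu by simp
  moreover have "x \<bullet> (M *\<^sub>v x) \<ge> 0" using Mpd x unfolding pos_def_mat_def
    by (cases "x = 0\<^sub>v n") (auto intro: less_imp_le)
  ultimately show ?thesis using b by (meson mult_right_mono order_trans)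
qed


context vec_space
begin

lemma full_rank_in_span:
  assumes Sc: "Sc \<subseteq> carrier_vec n" "finite Sc"
    and d: "vectorspace.dim class_ring (span_vs Sc) = n"
    and x: "x \<in> carrier_vec n"
  shows "x \<in> span Sc"
proof -
  obtain U where U: "finite U" "maximal U (\<lambda>T. T \<subseteq> Sc \<and> lin_indpt T)"
    using maximal_exists_superset[of Sc "\<lambda>T. T \<subseteq> Sc \<and> lin_indpt T" "{}"] Sc
    by (auto simp: lin_dep_def)
  have cU: "card U = n" using dim_span[OF Sc U(2)] d by simp
  have UP: "U \<subseteq> Sc" "lin_indpt U" using U(2) unfolding maximal_def by auto
  have "basis U"
    by (rule dim_li_is_basis) (use fin_dim U(1) UP Sc cU dim_is_n in auto)
  then have "span U = carrier_vec n" unfolding basis_def by auto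
  moreover have "span U \<subseteq> span Sc" using span_is_monotone UP(1) by metis
  ultimately show ?thesis using x by auto
qed

lemma orth_span_zero:
  assumes Sc: "Sc \<subseteq> carrier_vec n" "finite Sc"
    and d: "vectorspace.dim class_ring (span_vs Sc) = n"
    and x: "x \<in> carrier_vec n"
    and orth: "\<forall>c\<in>Sc. c \<bullet> x = 0"
  shows "x \<bullet> x = 0"
proof -
  have sx: "\<And>y z. y \<in> carrier_vec n \<Longrightarrow> z \<in> carrier_vec n \<Longrightarrow> y \<bullet> z = (\<Sum>i<n. y $ i * z $ i)"
    unfolding scalar_prod_def by (auto simp: atLeast0LessThan)
  have "x \<in> span Sc" by (rule full_rank_in_span[OF Sc d x])
  then obtain a A where A: "x = lincomb a A" "finite A" "A \<subseteq> Sc"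
    unfolding span_def by auto
  have Ac: "A \<subseteq> carrier_vec n" using A Sc by auto
  have "x \<bullet> x = (\<Sum>i<n. x $ i * x $ i)" by (rule sx[OF x x])
  also have "\<dots> = (\<Sum>i<n. x $ i * (\<Sum>u\<in>A. a u * u $ i))"
    by (intro sum.cong refl) (subst (2) A(1), simp add: lincomb_index[OF _ Ac])
  also have "\<dots> = (\<Sum>u\<in>A. a u * (\<Sum>i<n. u $ i * x $ i))"
    by (simp add: sum_distrib_left sum_distrib_right ac_simps) (rule sum.swap)
  also have "\<dots> = (\<Sum>u\<in>A. a u * (u \<bullet> x))"
    using Ac x by (intro sum.cong refl) (simp add: sx subsetD)
  also have "\<dots> = 0" using orth A(3) by (auto intro!: sum.neutral)
  finally show ?thesis .
qed

end

lemma rank_orth_zero: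
  fixes B :: "real mat"
  assumes r: "vec_space.rank p B = p"
    and cols: "set (cols B) \<subseteq> carrier_vec p"
    and x: "x \<in> carrier_vec p"
    and orth: "\<forall>c\<in>set (cols B). c \<bullet> x = 0"
  shows "x = 0\<^sub>v p"
  using vec_space.orth_span_zero[OF cols _ _ x orth] r self_sprod_eq0[OF x] unfolding vec_space.rank_def by auto


lemma foldr_append_rows:
  fixes C :: "nat \<Rightarrow> real mat" and x :: "real vec"
  assumes C: "\<forall>i\<in>set l. C i \<in> carrier_mat p (m i)" and x: "x \<in> carrier_vec p"
  shows "foldr (\<lambda>i A. transpose_mat (C i) @\<^sub>r A) l (0\<^sub>m 0 p) \<in> carrier_mat (sum_list (map m l)) p
    \<and> ((\<forall>i\<in>set l. transpose_mat (C i) *\<^sub>v x = 0\<^sub>v (m i)) \<longrightarrow>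
        foldr (\<lambda>i A. transpose_mat (C i) @\<^sub>r A) l (0\<^sub>m 0 p) *\<^sub>v x = 0\<^sub>v (sum_list (map m l)))"
  using C
proof (induction l)
  case Nil
  show ?case using x by (auto intro!: eq_vecI)
next
  case (Cons a l)
  let ?T = "foldr (\<lambda>i A. transpose_mat (C i) @\<^sub>r A) l (0\<^sub>m 0 p)"
  have IH: "?T \<in> carrier_mat (sum_list (map m l)) p"
    "(\<forall>i\<in>set l. transpose_mat (C i) *\<^sub>v x = 0\<^sub>v (m i)) \<longrightarrow> ?T *\<^sub>v x = 0\<^sub>v (sum_list (map m l))"
    using Cons by auto
  have Ca: "transpose_mat (C a) \<in> carrier_mat (m a) p" using Cons.prems by auto
  show ?case
  proof
    show "foldr (\<lambda>i A. transpose_mat (C i) @\<^sub>r A) (a # l) (0\<^sub>m 0 p) \<in> carrier_mat (sum_list (map m (a # l))) p"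
      using IH(1) Ca by auto
    show "(\<forall>i\<in>set (a # l). transpose_mat (C i) *\<^sub>v x = 0\<^sub>v (m i)) \<longrightarrow>
      foldr (\<lambda>i A. transpose_mat (C i) @\<^sub>r A) (a # l) (0\<^sub>m 0 p) *\<^sub>v x = 0\<^sub>v (sum_list (map m (a # l)))"
    proof
      assume z: "\<forall>i\<in>set (a # l). transpose_mat (C i) *\<^sub>v x = 0\<^sub>v (m i)"
      have "foldr (\<lambda>i A. transpose_mat (C i) @\<^sub>r A) (a # l) (0\<^sub>m 0 p) *\<^sub>v x
          = (transpose_mat (C a) *\<^sub>v x) @\<^sub>v (?T *\<^sub>v x)"
        using mat_mult_append[OF Ca IH(1) x] by simp
      also have "\<dots> = 0\<^sub>v (m a) @\<^sub>v 0\<^sub>v (sum_list (map m l))" using z IH(2) by simp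
      also have "\<dots> = 0\<^sub>v (sum_list (map m (a # l)))" by (intro eq_vecI) (auto simp: append_vec_def Let_def)
      finally show "foldr (\<lambda>i A. transpose_mat (C i) @\<^sub>r A) (a # l) (0\<^sub>m 0 p) *\<^sub>v x = 0\<^sub>v (sum_list (map m (a # l)))" .
    qed
  qed
qed

lemma block_row_inj:
  fixes C :: "nat \<Rightarrow> real mat" and x :: "real vec"
  assumes C: "\<forall>i<S. C i \<in> carrier_mat p (m i)" and r: "vec_space.rank p (block_row p C S) = p"
    and x: "x \<in> carrier_vec p" and z: "\<forall>i<S. transpose_mat (C i) *\<^sub>v x = 0\<^sub>v (m i)"
  shows "x = 0\<^sub>v p"
proof -
  let ?T = "foldr (\<lambda>i A. transpose_mat (C i) @\<^sub>r A) [0..<S] (0\<^sub>m 0 p)"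
  have FA: "?T \<in> carrier_mat (sum_list (map m [0..<S])) p \<and>
    ((\<forall>i\<in>set [0..<S]. transpose_mat (C i) *\<^sub>v x = 0\<^sub>v (m i)) \<longrightarrow>
        ?T *\<^sub>v x = 0\<^sub>v (sum_list (map m [0..<S])))"
    by (rule foldr_append_rows) (use C x in auto)
  have z': "\<forall>i\<in>set [0..<S]. transpose_mat (C i) *\<^sub>v x = 0\<^sub>v (m i)" using z by simp
  have F: "?T \<in> carrier_mat (sum_list (map m [0..<S])) p" "?T *\<^sub>v x = 0\<^sub>v (sum_list (map m [0..<S]))"
    using FA z' by blast+
  have cols: "set (cols (block_row p C S)) = set (rows ?T)" unfolding block_row_def cols_transpose ..
  show ?thesis
  proof (rule rank_orth_zero[OF r _ x])
    show "set (cols (block_row p C S)) \<subseteq> carrier_vec p" unfolding cols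
      using rows_carrier[of ?T] F(1) by simp
    show "\<forall>c\<in>set (cols (block_row p C S)). c \<bullet> x = 0"
    proof
      fix c assume "c \<in> set (cols (block_row p C S))"
      then obtain j where j: "j < dim_row ?T" "c = row ?T j" unfolding cols rows_def by auto
      have "c \<bullet> x = (?T *\<^sub>v x) $ j" using j by simp
      also have "\<dots> = 0" using F j by simp
      finally show "c \<bullet> x = 0" .
    qed
  qed
qed

lemma block_row_coercive:
  fixes C :: "nat \<Rightarrow> real mat"
  assumes C: "\<forall>i<S. C i \<in> carrier_mat p (m i)" and r: "vec_space.rank p (block_row p C S) = p"
  shows "\<exists>c>0. \<forall>x\<in>carrier_vec p. c * (x \<bullet> x) \<le> (\<Sum>i<S. (transpose_mat (C i) *\<^sub>v x) \<bullet> (transpose_mat (C i) *\<^sub>v x))"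
proof (rule homog_min)
  have e: "(\<Sum>i<S. (transpose_mat (C i) *\<^sub>v vec p x) \<bullet> (transpose_mat (C i) *\<^sub>v vec p x))
     = (\<Sum>i<S. \<Sum>j<m i. (\<Sum>k<p. C i $$ (k,j) * x k) * (\<Sum>k<p. C i $$ (k,j) * x k))" for x
  proof (intro sum.cong refl)
    fix i assume "i \<in> {..<S}"
    then have Ci: "transpose_mat (C i) \<in> carrier_mat (m i) p" using C by auto
    show "(transpose_mat (C i) *\<^sub>v vec p x) \<bullet> (transpose_mat (C i) *\<^sub>v vec p x)
       = (\<Sum>j<m i. (\<Sum>k<p. C i $$ (k,j) * x k) * (\<Sum>k<p. C i $$ (k,j) * x k))"
      using Ci C \<open>i \<in> {..<S}\<close>
      by (subst sprod_expand[of _ "m i"]) (auto intro!: sum.cong simp: mv_index[OF Ci])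
  qed
  show "continuous_on (sph p) (\<lambda>x. \<Sum>i<S. (transpose_mat (C i) *\<^sub>v vec p x) \<bullet> (transpose_mat (C i) *\<^sub>v vec p x))"
    unfolding e
    by (intro continuous_intros continuous_on_subset[OF continuous_on_product_coordinates]) auto
  show "\<forall>x\<in>carrier_vec p. \<forall>a. (\<Sum>i<S. (transpose_mat (C i) *\<^sub>v (a \<cdot>\<^sub>v x)) \<bullet> (transpose_mat (C i) *\<^sub>v (a \<cdot>\<^sub>v x)))
      = a^2 * (\<Sum>i<S. (transpose_mat (C i) *\<^sub>v x) \<bullet> (transpose_mat (C i) *\<^sub>v x))"
  proof (intro ballI allI)
    fix x :: "real vec" and a assume x: "x \<in> carrier_vec p"
    have "(transpose_mat (C i) *\<^sub>v (a \<cdot>\<^sub>v x)) \<bullet> (transpose_mat (C i) *\<^sub>v (a \<cdot>\<^sub>v x))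
      = a^2 * ((transpose_mat (C i) *\<^sub>v x) \<bullet> (transpose_mat (C i) *\<^sub>v x))" if i: "i < S" for i
    proof -
      have Ci: "transpose_mat (C i) \<in> carrier_mat (m i) p" using C i by auto
      have v: "transpose_mat (C i) *\<^sub>v x \<in> carrier_vec (m i)" using Ci x by auto
      show ?thesis unfolding mult_mat_vec[OF Ci x] by (rule smult_sprod_self[OF v])
    qed
    then show "(\<Sum>i<S. (transpose_mat (C i) *\<^sub>v (a \<cdot>\<^sub>v x)) \<bullet> (transpose_mat (C i) *\<^sub>v (a \<cdot>\<^sub>v x)))
      = a^2 * (\<Sum>i<S. (transpose_mat (C i) *\<^sub>v x) \<bullet> (transpose_mat (C i) *\<^sub>v x))"
      by (simp add: sum_distrib_left)
  qed
  show "\<forall>x\<in>carrier_vec p. x \<noteq> 0\<^sub>v p \<longrightarrow> 0 < (\<Sum>i<S. (transpose_mat (C i) *\<^sub>v x) \<bullet> (transpose_mat (C i) *\<^sub>v x))"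
  proof (intro ballI impI)
    fix x :: "real vec" assume x: "x \<in> carrier_vec p" and nz: "x \<noteq> 0\<^sub>v p"
    have "\<exists>i<S. transpose_mat (C i) *\<^sub>v x \<noteq> 0\<^sub>v (m i)"
    proof (rule ccontr)
      assume "\<not> (\<exists>i<S. transpose_mat (C i) *\<^sub>v x \<noteq> 0\<^sub>v (m i))"
      then have "\<forall>i<S. transpose_mat (C i) *\<^sub>v x = 0\<^sub>v (m i)" by simp
      from block_row_inj[OF C r x this] nz show False by simp
    qed
    then obtain i where i: "i < S" "transpose_mat (C i) *\<^sub>v x \<noteq> 0\<^sub>v (m i)" by blast
    have Cmi: "C i \<in> carrier_mat p (m i)" using C i(1) by blast
    have Ci: "transpose_mat (C i) *\<^sub>v x \<in> carrier_vec (m i)"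
      by (rule mult_mat_vec_carrier[OF transpose_carrier_mat[THEN iffD2, OF Cmi] x])
    have ne: "(transpose_mat (C i) *\<^sub>v x) \<bullet> (transpose_mat (C i) *\<^sub>v x) \<noteq> 0"
      using self_sprod_eq0[OF Ci] i(2) by blast
    have pos: "(transpose_mat (C i) *\<^sub>v x) \<bullet> (transpose_mat (C i) *\<^sub>v x) > 0"
      using self_sprod_ge0[of "transpose_mat (C i) *\<^sub>v x"] ne by linarith
    show "0 < (\<Sum>i<S. (transpose_mat (C i) *\<^sub>v x) \<bullet> (transpose_mat (C i) *\<^sub>v x))"
    proof (rule sum_pos2[of "{..<S}" i])
      show "i \<in> {..<S}" using i(1) by simp
    qed (use pos self_sprod_ge0 in auto)
  qed
qed


lemma lin2:
  fixes A :: "real mat"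
  assumes A: "A \<in> carrier_mat n n" and x: "x \<in> carrier_vec n" and y: "y \<in> carrier_vec n" and w: "w \<in> carrier_vec n"
  shows "w \<bullet> (A *\<^sub>v (s \<cdot>\<^sub>v x + t \<cdot>\<^sub>v y)) = s * (w \<bullet> (A *\<^sub>v x)) + t * (w \<bullet> (A *\<^sub>v y))"
proof -
  have "A *\<^sub>v (s \<cdot>\<^sub>v x + t \<cdot>\<^sub>v y) = s \<cdot>\<^sub>v (A *\<^sub>v x) + t \<cdot>\<^sub>v (A *\<^sub>v y)"
    using A x y by (simp add: mult_add_distrib_mat_vec[of A n n] mult_mat_vec[of A n n])
  then show ?thesis using A x y w by (simp add: scalar_prod_add_distrib[of _ n])
qed

lemma comb2:
  fixes A :: "real mat"
  assumes A: "A \<in> carrier_mat n n" and x: "x \<in> carrier_vec n" and y: "y \<in> carrier_vec n"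
  shows "(s1 \<cdot>\<^sub>v x + t1 \<cdot>\<^sub>v y) \<bullet> (A *\<^sub>v (s2 \<cdot>\<^sub>v x + t2 \<cdot>\<^sub>v y)) =
     s1*s2*(x \<bullet> (A *\<^sub>v x)) + s1*t2*(x \<bullet> (A *\<^sub>v y)) + t1*s2*(y \<bullet> (A *\<^sub>v x)) + t1*t2*(y \<bullet> (A *\<^sub>v y))"
proof -
  have c: "A *\<^sub>v x \<in> carrier_vec n" "A *\<^sub>v y \<in> carrier_vec n" using A x y by auto
  have "(s1 \<cdot>\<^sub>v x + t1 \<cdot>\<^sub>v y) \<bullet> (A *\<^sub>v (s2 \<cdot>\<^sub>v x + t2 \<cdot>\<^sub>v y)) =
    (s1 \<cdot>\<^sub>v x) \<bullet> (A *\<^sub>v (s2 \<cdot>\<^sub>v x + t2 \<cdot>\<^sub>v y)) + (t1 \<cdot>\<^sub>v y) \<bullet> (A *\<^sub>v (s2 \<cdot>\<^sub>v x + t2 \<cdot>\<^sub>v y))"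
    using A x y by (intro add_scalar_prod_distrib[of _ n]) auto
  also have "\<dots> = s1 * (x \<bullet> (A *\<^sub>v (s2 \<cdot>\<^sub>v x + t2 \<cdot>\<^sub>v y))) + t1 * (y \<bullet> (A *\<^sub>v (s2 \<cdot>\<^sub>v x + t2 \<cdot>\<^sub>v y)))"
    using A x y by simp
  also have "\<dots> = s1*s2*(x \<bullet> (A *\<^sub>v x)) + s1*t2*(x \<bullet> (A *\<^sub>v y)) + t1*s2*(y \<bullet> (A *\<^sub>v x)) + t1*t2*(y \<bullet> (A *\<^sub>v y))"
    unfolding lin2[OF A x y x] lin2[OF A x y y] by (simp add: algebra_simps)
  finally show ?thesis .
qed

lemma alg1:
  fixes Maa Mab Mbb Kaa Kab Kbb qa qb dt g D c :: real
  assumes "Mab - Maa = qa - dt * ((1 - g) * Kaa + g * Kab)"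
    "Mbb - Mab = qb - dt * ((1 - g) * Kab + g * Kbb)"
    "D = Mbb - 2 * Mab + Maa" "c = (1-g) * (Kab - Kaa) + g * (Kbb - Kab)"
  shows "D = qb - qa - dt * c"
proof -
  have "D = (Mbb - Mab) - (Mab - Maa)" using assms(3) by simp
  also have "\<dots> = qb - qa - dt * ((1 - g) * (Kab - Kaa) + g * (Kbb - Kab))"
    unfolding assms(1,2) by (simp add: algebra_simps)
  finally show ?thesis using assms(4) by simp
qed
lemma alg2:
  fixes Maa Mab Mbb Kaa Kab Kbb qa qb dt g D a :: real
  assumes "Mab - Maa = qa - dt * ((1 - g) * Kaa + g * Kab)"
    "Mbb - Mab = qb - dt * ((1 - g) * Kab + g * Kbb)"
    "D = Mbb - 2 * Mab + Maa" "a = (1-g)^2 * Kaa + 2*g*(1-g) * Kab + g^2 * Kbb"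
  shows "Mbb - Maa = 2 * ((1 - g) * qa + g * qb - dt * a) + (1 - 2*g) * D"
proof -
  have e1: "Mbb - Maa = (Mbb - Mab) + (Mab - Maa)" by simp
  have "2 * ((1 - g) * qa + g * qb - dt * a) + (1 - 2*g) * D
     = 2 * ((1 - g) * (Mab - Maa + dt * ((1 - g) * Kaa + g * Kab)) + g * (Mbb - Mab + dt * ((1 - g) * Kab + g * Kbb)) - dt * a) + (1 - 2*g) * D"
    using assms(1,2) by (simp add: algebra_simps)
  also have "\<dots> = Mbb - Maa" unfolding assms(3,4) by (simp add: algebra_simps power2_eq_square)
  finally show ?thesis by simp
qed

lemma block_facts:
  fixes M K C :: "real mat"
  assumes Mpd: "pos_def_mat n M" and Kp: "pos_semidef_mat n K" and C: "C \<in> carrier_mat p n"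
    and fa: "fa \<in> carrier_vec n" and fb: "fb \<in> carrier_vec n"
    and ea: "ea \<in> carrier_vec n" and eb: "eb \<in> carrier_vec n"
    and la: "la \<in> carrier_vec p" and lb: "lb \<in> carrier_vec p"
    and ma: "M *\<^sub>v fa + K *\<^sub>v ea = transpose_mat C *\<^sub>v la"
    and mb: "M *\<^sub>v fb + K *\<^sub>v eb = transpose_mat C *\<^sub>v lb"
    and up: "eb = ea + dt \<cdot>\<^sub>v ((1 - g) \<cdot>\<^sub>v fa + g \<cdot>\<^sub>v fb)"
  defines "qa \<equiv> lb \<bullet> (C *\<^sub>v fa) - la \<bullet> (C *\<^sub>v fa)"
    and "qb \<equiv> lb \<bullet> (C *\<^sub>v fb) - la \<bullet> (C *\<^sub>v fb)"
    and "D \<equiv> ((-1) \<cdot>\<^sub>v fa + 1 \<cdot>\<^sub>v fb) \<bullet> (M *\<^sub>v ((-1) \<cdot>\<^sub>v fa + 1 \<cdot>\<^sub>v fb))"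
    and "a \<equiv> ((1 - g) \<cdot>\<^sub>v fa + g \<cdot>\<^sub>v fb) \<bullet> (K *\<^sub>v ((1 - g) \<cdot>\<^sub>v fa + g \<cdot>\<^sub>v fb))"
    and "c \<equiv> ((-1) \<cdot>\<^sub>v fa + 1 \<cdot>\<^sub>v fb) \<bullet> (K *\<^sub>v ((1 - g) \<cdot>\<^sub>v fa + g \<cdot>\<^sub>v fb))"
    and "b \<equiv> ((-1) \<cdot>\<^sub>v fa + 1 \<cdot>\<^sub>v fb) \<bullet> (K *\<^sub>v ((-1) \<cdot>\<^sub>v fa + 1 \<cdot>\<^sub>v fb))"
  shows "fb \<bullet> (M *\<^sub>v fb) - fa \<bullet> (M *\<^sub>v fa) = 2 * ((1 - g) * qa + g * qb - dt * a) + (1 - 2*g) * D"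
    and "D = qb - qa - dt * c"
    and "a \<ge> 0" and "D \<ge> 0"
    and "\<And>t. t > 0 \<Longrightarrow> - 2 * c \<le> t * b + a / t"
proof -
  have M: "M \<in> carrier_mat n n" "sym_mat M" using Mpd unfolding pos_def_mat_def by auto
  have K: "K \<in> carrier_mat n n" "sym_mat K" using Kp unfolding pos_semidef_mat_def by auto
  have Mnn: "x \<bullet> (M *\<^sub>v x) \<ge> 0" if x: "x \<in> carrier_vec n" for x
  proof (cases "x = 0\<^sub>v n")
    case True then show ?thesis using M(1) by (simp add: scalar_prod_def)
  next
    case False then show ?thesis using Mpd x unfolding pos_def_mat_def by (auto intro: less_imp_le)
  qed
  have Knn: "\<And>x. x \<in> carrier_vec n \<Longrightarrow> x \<bullet> (K *\<^sub>v x) \<ge> 0"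
    using Kp unfolding pos_semidef_mat_def by auto
  have symM: "fb \<bullet> (M *\<^sub>v fa) = fa \<bullet> (M *\<^sub>v fb)" using sym_bil[OF M fa fb] .
  have symK: "fb \<bullet> (K *\<^sub>v fa) = fa \<bullet> (K *\<^sub>v fb)" using sym_bil[OF K fa fb] .
  have R: "w \<bullet> (M *\<^sub>v fb) - w \<bullet> (M *\<^sub>v fa) = (lb \<bullet> (C *\<^sub>v w) - la \<bullet> (C *\<^sub>v w))
      - dt * ((1 - g) * (w \<bullet> (K *\<^sub>v fa)) + g * (w \<bullet> (K *\<^sub>v fb)))" if w: "w \<in> carrier_vec n" for w
  proof -
    have a1: "w \<bullet> (M *\<^sub>v fa) + w \<bullet> (K *\<^sub>v ea) = w \<bullet> (transpose_mat C *\<^sub>v la)"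
      using arg_cong[OF ma, of "\<lambda>z. w \<bullet> z"] M K fa ea w by (simp add: scalar_prod_add_distrib[of _ n])
    have b1: "w \<bullet> (M *\<^sub>v fb) + w \<bullet> (K *\<^sub>v eb) = w \<bullet> (transpose_mat C *\<^sub>v lb)"
      using arg_cong[OF mb, of "\<lambda>z. w \<bullet> z"] M K fb eb w by (simp add: scalar_prod_add_distrib[of _ n])
    have ta: "w \<bullet> (transpose_mat C *\<^sub>v la) = la \<bullet> (C *\<^sub>v w)"
      using transpose_sprod[OF C w la] comm_scalar_prod[of w n "transpose_mat C *\<^sub>v la"] C la w by auto
    have tb: "w \<bullet> (transpose_mat C *\<^sub>v lb) = lb \<bullet> (C *\<^sub>v w)"
      using transpose_sprod[OF C w lb] comm_scalar_prod[of w n "transpose_mat C *\<^sub>v lb"] C lb w by auto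
    have uc: "(1 - g) \<cdot>\<^sub>v fa + g \<cdot>\<^sub>v fb \<in> carrier_vec n" using fa fb by simp
    have "w \<bullet> (K *\<^sub>v eb) = w \<bullet> (K *\<^sub>v ea) + dt * (w \<bullet> (K *\<^sub>v ((1 - g) \<cdot>\<^sub>v fa + g \<cdot>\<^sub>v fb)))"
      unfolding up using K ea uc w
      by (simp add: mult_add_distrib_mat_vec[of K n n] mult_mat_vec[of K n n] scalar_prod_add_distrib[of _ n])
    also have "w \<bullet> (K *\<^sub>v ((1 - g) \<cdot>\<^sub>v fa + g \<cdot>\<^sub>v fb)) = (1 - g) * (w \<bullet> (K *\<^sub>v fa)) + g * (w \<bullet> (K *\<^sub>v fb))"
      by (rule lin2[OF K(1) fa fb w])
    finally have "w \<bullet> (K *\<^sub>v eb) = w \<bullet> (K *\<^sub>v ea) + dt * ((1 - g) * (w \<bullet> (K *\<^sub>v fa)) + g * (w \<bullet> (K *\<^sub>v fb)))" .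
    then show ?thesis using a1 b1 ta tb by linarith
  qed
  have Ra: "fa \<bullet> (M *\<^sub>v fb) - fa \<bullet> (M *\<^sub>v fa) = qa - dt * ((1 - g) * (fa \<bullet> (K *\<^sub>v fa)) + g * (fa \<bullet> (K *\<^sub>v fb)))"
    using R[OF fa] unfolding qa_def .
  have Rb: "fb \<bullet> (M *\<^sub>v fb) - fa \<bullet> (M *\<^sub>v fb) = qb - dt * ((1 - g) * (fa \<bullet> (K *\<^sub>v fb)) + g * (fb \<bullet> (K *\<^sub>v fb)))"
    using R[OF fb] symM symK unfolding qb_def by simp
  have Dx: "D = fb \<bullet> (M *\<^sub>v fb) - 2 * (fa \<bullet> (M *\<^sub>v fb)) + fa \<bullet> (M *\<^sub>v fa)"
    unfolding D_def comb2[OF M(1) fa fb] using symM by simp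
  have ax: "a = (1-g)^2 * (fa \<bullet> (K *\<^sub>v fa)) + 2*g*(1-g) * (fa \<bullet> (K *\<^sub>v fb)) + g^2 * (fb \<bullet> (K *\<^sub>v fb))"
    unfolding a_def comb2[OF K(1) fa fb] using symK by (simp add: power2_eq_square algebra_simps)
  have cx: "c = (1-g) * (fa \<bullet> (K *\<^sub>v fb) - fa \<bullet> (K *\<^sub>v fa)) + g * (fb \<bullet> (K *\<^sub>v fb) - fa \<bullet> (K *\<^sub>v fb))"
    unfolding c_def comb2[OF K(1) fa fb] using symK by (simp add: algebra_simps)
  have bx: "b = fb \<bullet> (K *\<^sub>v fb) - 2 * (fa \<bullet> (K *\<^sub>v fb)) + fa \<bullet> (K *\<^sub>v fa)"
    unfolding b_def comb2[OF K(1) fa fb] using symK by simp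
  show "D = qb - qa - dt * c" by (rule alg1[OF Ra Rb Dx cx])
  show "fb \<bullet> (M *\<^sub>v fb) - fa \<bullet> (M *\<^sub>v fa) = 2 * ((1 - g) * qa + g * qb - dt * a) + (1 - 2*g) * D"
    by (rule alg2[OF Ra Rb Dx ax])
  show "a \<ge> 0" unfolding a_def using fa fb by (intro Knn) simp
  show "D \<ge> 0" unfolding D_def using fa fb by (intro Mnn) simp
  show "- 2 * c \<le> t * b + a / t" if t: "t > 0" for t
  proof -
    have "0 \<le> ((1 - g - t) \<cdot>\<^sub>v fa + (g + t) \<cdot>\<^sub>v fb) \<bullet> (K *\<^sub>v ((1 - g - t) \<cdot>\<^sub>v fa + (g + t) \<cdot>\<^sub>v fb))"
      using fa fb by (intro Knn) simp
    also have "\<dots> = t^2 * b + 2 * t * c + a"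
      unfolding comb2[OF K(1) fa fb] ax bx cx using symK by (simp add: power2_eq_square algebra_simps)
    finally have "0 \<le> t^2 * b + 2 * t * c + a" .
    then have "0 \<le> t * (t * b + 2 * c + a / t)" using t by (simp add: power2_eq_square algebra_simps)
    then have "0 \<le> t * b + 2 * c + a / t" using t by (simp add: zero_le_mult_iff)
    then show ?thesis by linarith
  qed
qed


lemma energy_sum:
  fixes E D a c b qa qb :: "nat \<Rightarrow> real" and I :: "nat set"
  assumes fin: "finite I"
    and F1: "\<forall>i\<in>I. E i = 2 * ((1 - g) * qa i + g * qb i - dt * a i) + (1 - 2*g) * D i"
    and F2: "\<forall>i\<in>I. D i = qb i - qa i - dt * c i"
    and F3: "\<forall>i\<in>I. a i \<ge> 0 \<and> D i \<ge> 0"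
    and F4: "\<forall>i\<in>I. \<forall>t>0. - 2 * c i \<le> t * b i + a i / t"
    and sqa: "sum qa I = 0" and sqb: "sum qb I = 0"
    and dt: "dt > 0" and al: "al > 0"
    and stab: "1/2 \<le> g \<or> (g < 1/2 \<and> (\<forall>i\<in>I. dt * b i \<le> (2 / (1 - 2*g) - al) * D i))"
  shows "sum E I \<le> 0"
proof -
  have SE: "sum E I = - 2 * dt * sum a I + (1 - 2*g) * sum D I"
  proof -
    have "sum E I = (\<Sum>i\<in>I. 2 * (1 - g) * qa i + 2 * g * qb i - 2 * dt * a i + (1 - 2*g) * D i)"
      using F1 by (intro sum.cong) (auto simp: algebra_simps)
    also have "\<dots> = 2 * (1 - g) * sum qa I + 2 * g * sum qb I - 2 * dt * sum a I + (1 - 2*g) * sum D I"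
      by (simp add: sum.distrib sum_subtractf sum_distrib_left)
    finally show ?thesis using sqa sqb by simp
  qed
  have SD: "sum D I = - dt * sum c I"
  proof -
    have "sum D I = (\<Sum>i\<in>I. qb i - qa i - dt * c i)" using F2 by (intro sum.cong) auto
    also have "\<dots> = sum qb I - sum qa I - dt * sum c I" by (simp add: sum_subtractf sum_distrib_left)
    finally show ?thesis using sqa sqb by simp
  qed
  have Da: "sum a I \<ge> 0" "sum D I \<ge> 0" using F3 by (auto intro: sum_nonneg)
  show ?thesis
  proof (cases "1/2 \<le> g")
    case True
    then have "(1 - 2*g) * sum D I \<le> 0" using Da by (simp add: mult_nonpos_nonneg)
    moreover have "0 \<le> 2 * dt * sum a I" using Da dt by simp
    ultimately show ?thesis using SE by linarith
  next
    case False
    then have g: "g < 1/2" and Kb: "\<forall>i\<in>I. dt * b i \<le> (2 / (1 - 2*g) - al) * D i" using stab by auto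
    define s where "s = 1/2 - g"
    have s: "s > 0" using g unfolding s_def by simp
    have W: "2 / (1 - 2*g) = 1 / s" unfolding s_def by (simp add: field_simps)
    have c1: "sum (\<lambda>i. - 2 * c i) I \<le> sum (\<lambda>i. s * b i + a i / s) I"
      using F4 s by (intro sum_mono) auto
    then have c2: "- 2 * sum c I \<le> s * sum b I + sum a I / s"
      by (simp add: sum.distrib sum_distrib_left sum_divide_distrib)
    have b1: "dt * sum b I \<le> (1 / s - al) * sum D I"
    proof -
      have "sum (\<lambda>i. dt * b i) I \<le> sum (\<lambda>i. (2 / (1 - 2*g) - al) * D i) I"
        using Kb by (intro sum_mono) auto
      then show ?thesis unfolding W by (simp add: sum_distrib_left)
    qed
    have "2 * sum D I = dt * (- 2 * sum c I)" using SD by simp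
    also have "\<dots> \<le> dt * (s * sum b I + sum a I / s)" using c2 dt by (intro mult_left_mono) auto
    also have "\<dots> = s * (dt * sum b I) + dt * sum a I / s" by (simp add: algebra_simps)
    also have "\<dots> \<le> s * ((1 / s - al) * sum D I) + dt * sum a I / s"
      using b1 s by (intro add_right_mono mult_left_mono) auto
    also have "s * ((1 / s - al) * sum D I) = (1 - al * s) * sum D I" using s by (simp add: field_simps)
    finally have "2 * sum D I \<le> (1 - al * s) * sum D I + dt * sum a I / s" .
    then have "(1 + al * s) * sum D I \<le> dt * sum a I / s" by (simp add: algebra_simps)
    then have "s * ((1 + al * s) * sum D I) \<le> dt * sum a I" using s by (simp add: field_simps)
    moreover have "s * sum D I \<le> s * ((1 + al * s) * sum D I)"
      using s al Da by (simp add: algebra_simps mult_nonneg_nonneg)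
    ultimately have "s * sum D I \<le> dt * sum a I" by linarith
    then show ?thesis using SE unfolding s_def by (simp add: algebra_simps)
  qed
qed


lemma vnorm_L2:
  assumes "x \<in> carrier_vec n"
  shows "vnorm x = L2_set (\<lambda>j. x $ j) {..<n}"
  unfolding vnorm_def L2_set_def using sprod_expand[OF assms assms] by (simp add: power2_eq_square)

lemma vnorm_nonneg: "vnorm x \<ge> 0"
  unfolding vnorm_def using self_sprod_ge0[of x] by simp

lemma vnorm_sq: "(vnorm x)^2 = x \<bullet> x"
  unfolding vnorm_def using self_sprod_ge0[of x] by simp

lemma vnorm_add:
  assumes "x \<in> carrier_vec n" "y \<in> carrier_vec n"
  shows "vnorm (x + y) \<le> vnorm x + vnorm y"
proof -
  have "vnorm (x + y) = L2_set (\<lambda>j. x $ j + y $ j) {..<n}"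
    using assms by (subst vnorm_L2[of _ n]) (auto intro!: L2_set_cong)
  also have "\<dots> \<le> L2_set (\<lambda>j. x $ j) {..<n} + L2_set (\<lambda>j. y $ j) {..<n}"
    by (rule L2_set_triangle_ineq)
  finally show ?thesis using assms by (simp add: vnorm_L2)
qed

lemma vnorm_smult:
  assumes "x \<in> carrier_vec n"
  shows "vnorm (c \<cdot>\<^sub>v x) = \<bar>c\<bar> * vnorm x"
proof -
  have "vnorm (c \<cdot>\<^sub>v x) = sqrt (c^2 * (x \<bullet> x))"
    unfolding vnorm_def using smult_sprod_self[OF assms] by simp
  also have "\<dots> = \<bar>c\<bar> * vnorm x" unfolding vnorm_def by (simp add: real_sqrt_mult)
  finally show ?thesis .
qed

lemma vnorm_diff:
  assumes "x \<in> carrier_vec n" "y \<in> carrier_vec n"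
  shows "vnorm (x - y) \<le> vnorm x + vnorm y"
proof -
  have "x - y = x + (-1) \<cdot>\<^sub>v y" using assms by (intro eq_vecI) auto
  then have "vnorm (x - y) \<le> vnorm x + vnorm ((-1) \<cdot>\<^sub>v y)"
    using vnorm_add[OF assms(1), of "(-1) \<cdot>\<^sub>v y"] assms by simp
  then show ?thesis using vnorm_smult[OF assms(2), of "-1"] by simp
qed

definition frob :: "real mat \<Rightarrow> real" where
  "frob A = sqrt (\<Sum>k<dim_row A. \<Sum>j<dim_col A. (A $$ (k,j))^2)"

lemma frob_nonneg: "frob A \<ge> 0"
  unfolding frob_def by (simp add: sum_nonneg)

lemma vnorm_mv:
  fixes A :: "real mat"
  assumes A: "A \<in> carrier_mat nr nc" and x: "x \<in> carrier_vec nc"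
  shows "vnorm (A *\<^sub>v x) \<le> frob A * vnorm x"
proof -
  have row: "((A *\<^sub>v x) $ k)^2 \<le> (\<Sum>j<nc. (A $$ (k,j))^2) * (x \<bullet> x)" if k: "k < nr" for k
  proof -
    have "\<bar>(A *\<^sub>v x) $ k\<bar> = \<bar>\<Sum>j<nc. A $$ (k,j) * x $ j\<bar>" using mv_index[OF A x k] by simp
    also have "\<dots> \<le> (\<Sum>j<nc. \<bar>A $$ (k,j)\<bar> * \<bar>x $ j\<bar>)"
      by (rule order_trans[OF sum_abs]) (simp add: abs_mult)
    also have "\<dots> \<le> L2_set (\<lambda>j. A $$ (k,j)) {..<nc} * L2_set (\<lambda>j. x $ j) {..<nc}"
      by (rule L2_set_mult_ineq)
    finally have h: "\<bar>(A *\<^sub>v x) $ k\<bar> \<le> L2_set (\<lambda>j. A $$ (k,j)) {..<nc} * vnorm x"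
      using vnorm_L2[OF x] by simp
    have "((A *\<^sub>v x) $ k)^2 = \<bar>(A *\<^sub>v x) $ k\<bar>^2" by simp
    also have "\<dots> \<le> (L2_set (\<lambda>j. A $$ (k,j)) {..<nc} * vnorm x)^2"
      using h by (intro power_mono) auto
    also have "\<dots> = (\<Sum>j<nc. (A $$ (k,j))^2) * (x \<bullet> x)"
      unfolding power_mult_distrib vnorm_sq L2_set_def by (simp add: sum_nonneg)
    finally show ?thesis .
  qed
  have Ax: "A *\<^sub>v x \<in> carrier_vec nr" using A x by auto
  have "(A *\<^sub>v x) \<bullet> (A *\<^sub>v x) = (\<Sum>k<nr. ((A *\<^sub>v x) $ k)^2)"
    using sprod_expand[OF Ax Ax] by (simp add: power2_eq_square)
  also have "\<dots> \<le> (\<Sum>k<nr. (\<Sum>j<nc. (A $$ (k,j))^2) * (x \<bullet> x))"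
    by (intro sum_mono row) auto
  also have "\<dots> = (frob A)^2 * (x \<bullet> x)"
    unfolding frob_def using A by (simp add: sum_distrib_right sum_nonneg)
  finally have "(vnorm (A *\<^sub>v x))^2 \<le> (frob A * vnorm x)^2"
    unfolding vnorm_sq power_mult_distrib by simp
  then show ?thesis using frob_nonneg vnorm_nonneg
    by (meson mult_nonneg_nonneg power2_le_imp_le)
qed

lemma vsum_carrier: "vsum p F I \<in> carrier_vec p"
  unfolding vsum_def by simp

lemma vsum_index: "k < p \<Longrightarrow> vsum p F I $ k = (\<Sum>i\<in>I. F i $ k)"
  unfolding vsum_def by simp

lemma vsum_sprod:
  assumes w: "w \<in> carrier_vec p" and F: "\<forall>i\<in>I. F i \<in> carrier_vec p" and fin: "finite I"
  shows "w \<bullet> vsum p F I = (\<Sum>i\<in>I. w \<bullet> F i)"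
proof -
  have "w \<bullet> vsum p F I = (\<Sum>k<p. w $ k * (\<Sum>i\<in>I. F i $ k))"
    using sprod_expand[OF w vsum_carrier] by (simp add: vsum_index)
  also have "\<dots> = (\<Sum>i\<in>I. \<Sum>k<p. w $ k * F i $ k)"
    by (simp add: sum_distrib_left) (rule sum.swap)
  also have "\<dots> = (\<Sum>i\<in>I. w \<bullet> F i)"
    using F w by (intro sum.cong refl) (simp add: sprod_expand[of _ p])
  finally show ?thesis .
qed

lemma bounded_seqI: "(\<And>n. vnorm (X n) \<le> B) \<Longrightarrow> bounded_seq X"
proof -
  assume h: "\<And>n. vnorm (X n) \<le> B"
  have "\<forall>n. vnorm (X n) < B + 1" using h by (metis add.commute less_add_one order_le_less_trans)
  then show ?thesis unfolding bounded_seq_def by blast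
qed


lemma mv3:
  fixes A :: "real mat"
  assumes A: "A \<in> carrier_mat nr nc" and x: "x \<in> carrier_vec nc" and y: "y \<in> carrier_vec nc"
    and z: "z \<in> carrier_vec nc" and k: "k < nr"
  shows "(A *\<^sub>v (x + t \<cdot>\<^sub>v (s1 \<cdot>\<^sub>v y + s2 \<cdot>\<^sub>v z))) $ k = (A *\<^sub>v x) $ k + t * (s1 * (A *\<^sub>v y) $ k + s2 * (A *\<^sub>v z) $ k)"
proof -
  have w: "x + t \<cdot>\<^sub>v (s1 \<cdot>\<^sub>v y + s2 \<cdot>\<^sub>v z) \<in> carrier_vec nc" using x y z by simp
  have "(A *\<^sub>v (x + t \<cdot>\<^sub>v (s1 \<cdot>\<^sub>v y + s2 \<cdot>\<^sub>v z))) $ k = (\<Sum>j<nc. A $$ (k,j) * (x + t \<cdot>\<^sub>v (s1 \<cdot>\<^sub>v y + s2 \<cdot>\<^sub>v z)) $ j)"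
    by (rule mv_index[OF A w k])
  also have "\<dots> = (\<Sum>j<nc. A $$ (k,j) * x $ j + t * (s1 * (A $$ (k,j) * y $ j) + s2 * (A $$ (k,j) * z $ j)))"
    using x y z by (intro sum.cong refl) (auto simp: algebra_simps)
  also have "\<dots> = (A *\<^sub>v x) $ k + t * (s1 * (A *\<^sub>v y) $ k + s2 * (A *\<^sub>v z) $ k)"
    unfolding mv_index[OF A x k] mv_index[OF A y k] mv_index[OF A z k]
    by (simp add: sum.distrib sum_distrib_left distrib_left)
  finally show ?thesis .
qed

lemma mv2m:
  fixes A :: "real mat"
  assumes A: "A \<in> carrier_mat nr nc" and x: "x \<in> carrier_vec nc" and y: "y \<in> carrier_vec nc"
    and k: "k < nr"
  shows "(A *\<^sub>v (x - t \<cdot>\<^sub>v y)) $ k = (A *\<^sub>v x) $ k - t * (A *\<^sub>v y) $ k"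
proof -
  have w: "x - t \<cdot>\<^sub>v y \<in> carrier_vec nc" using x y by simp
  have "(A *\<^sub>v (x - t \<cdot>\<^sub>v y)) $ k = (\<Sum>j<nc. A $$ (k,j) * (x - t \<cdot>\<^sub>v y) $ j)"
    by (rule mv_index[OF A w k])
  also have "\<dots> = (\<Sum>j<nc. A $$ (k,j) * x $ j - t * (A $$ (k,j) * y $ j))"
    using x y by (intro sum.cong refl) (auto simp: algebra_simps)
  also have "\<dots> = (A *\<^sub>v x) $ k - t * (A *\<^sub>v y) $ k"
    unfolding mv_index[OF A x k] mv_index[OF A y k]
    by (simp add: sum_subtractf sum_distrib_left)
  finally show ?thesis .
qed

lemma mv2d:
  fixes A :: "real mat"
  assumes A: "A \<in> carrier_mat nr nc" and x: "x \<in> carrier_vec nc" and y: "y \<in> carrier_vec nc"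
    and k: "k < nr"
  shows "(A *\<^sub>v (x - y)) $ k = (A *\<^sub>v x) $ k - (A *\<^sub>v y) $ k"
  using mv2m[OF A x y k, of 1] x y by simp

lemma r_facts:
  fixes \<gamma> \<alpha> :: real
  assumes gamma: "0 \<le> \<gamma>" "\<gamma> \<le> 1" and alpha: "\<alpha> > 0"
    and st: "1/2 \<le> \<gamma> \<or> (\<gamma> < 1/2 \<and> \<alpha> \<le> 1 / \<bar>\<gamma> - 1/2\<bar>)"
  defines "r \<equiv> (1 - \<alpha> * (1 - \<gamma>)) / (1 + \<alpha> * \<gamma>)"
  shows "\<bar>r\<bar> \<le> 1" "\<bar>r\<bar> < 1 \<or> (r = -1 \<and> \<gamma> < 1/2 \<and> \<alpha> = 2 / (1 - 2*\<gamma>))"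
    "(1 + \<alpha> * \<gamma>) * r = 1 - \<alpha> * (1 - \<gamma>)"
proof -
  have den: "1 + \<alpha> * \<gamma> > 0" using alpha gamma by (simp add: add_pos_nonneg)
  show rr: "(1 + \<alpha> * \<gamma>) * r = 1 - \<alpha> * (1 - \<gamma>)" unfolding r_def using den by simp
  have lt1: "r < 1" unfolding r_def using den alpha by (simp add: divide_less_eq algebra_simps)
  have ge: "\<alpha> * (1 - 2*\<gamma>) \<le> 2"
  proof (cases "1/2 \<le> \<gamma>")
    case True then have "\<alpha> * (1 - 2*\<gamma>) \<le> 0" using alpha by (simp add: mult_nonneg_nonpos)
    then show ?thesis by simp
  next
    case False
    then have g: "\<gamma> < 1/2" and a: "\<alpha> \<le> 1 / \<bar>\<gamma> - 1/2\<bar>" using st by auto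
    have e: "\<bar>\<gamma> - 1/2\<bar> = (1 - 2*\<gamma>)/2" using g by simp
    have "1 / \<bar>\<gamma> - 1/2\<bar> = 2 / (1 - 2*\<gamma>)" unfolding e by simp
    then have "\<alpha> \<le> 2 / (1 - 2*\<gamma>)" using a by simp
    then show ?thesis using g by (simp add: le_divide_eq mult.commute)
  qed
  have gem1: "r \<ge> -1" unfolding r_def using den ge by (simp add: le_divide_eq algebra_simps)
  show "\<bar>r\<bar> \<le> 1" using lt1 gem1 by simp
  show "\<bar>r\<bar> < 1 \<or> (r = -1 \<and> \<gamma> < 1/2 \<and> \<alpha> = 2 / (1 - 2*\<gamma>))"
  proof (cases "r = -1")
    case True
    then have "\<alpha> * (1 - 2*\<gamma>) = 2" using rr by (simp add: algebra_simps)
    moreover have "\<gamma> < 1/2"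
    proof (rule ccontr)
      assume "\<not> \<gamma> < 1/2"
      then have "1 - 2*\<gamma> \<le> 0" by simp
      then have "\<alpha> * (1 - 2*\<gamma>) \<le> 0" using alpha by (simp add: mult_nonneg_nonpos)
      then show False using \<open>\<alpha> * (1 - 2*\<gamma>) = 2\<close> by simp
    qed
    ultimately show ?thesis using True by (simp add: eq_divide_eq)
  next
    case False then show ?thesis using lt1 gem1 by simp
  qed
qed


theorem mainTheorem5:
  fixes S p :: nat and m :: "nat \<Rightarrow> nat"
    and M K C :: "nat \<Rightarrow> real mat"
    and \<gamma> \<Delta>t \<alpha> :: real
    and d v :: "nat \<Rightarrow> nat \<Rightarrow> real vec"   (* d i n, v i n *)
    and lam :: "nat \<Rightarrow> real vec"
  assumes S_ge: "S \<ge> 1"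
    and M_spd: "\<forall>i<S. pos_def_mat (m i) (M i)"
    and K_spsd: "\<forall>i<S. pos_semidef_mat (m i) (K i)"
    and C_dim: "\<forall>i<S. C i \<in> carrier_mat p (m i)"
    and C_sb: "\<forall>i<S. signed_boolean_mat (C i)"
    and C_rank: "vec_space.rank p (block_row p C S) = p"
    and gamma: "0 \<le> \<gamma>" "\<gamma> \<le> 1"
    and dt: "\<Delta>t > 0" and alpha: "\<alpha> > 0"
    and stab: "(1/2 \<le> \<gamma> \<and> \<gamma> \<le> 1) \<or>
               (0 \<le> \<gamma> \<and> \<gamma> < 1/2 \<and> \<alpha> \<le> 1 / \<bar>\<gamma> - 1/2\<bar> \<and>
                (\<forall>i<S. \<Delta>t * omega_max (K i) (M i) \<le> 2 / (1 - 2*\<gamma>) - \<alpha>))"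
    and d_dim: "\<forall>i<S. \<forall>n. d i n \<in> carrier_vec (m i)"
    and v_dim: "\<forall>i<S. \<forall>n. v i n \<in> carrier_vec (m i)"
    and lam_dim: "\<forall>n. lam n \<in> carrier_vec p"
    and eq_motion: "\<forall>n. \<forall>i<S.
          M i *\<^sub>v v i n + K i *\<^sub>v d i n = transpose_mat (C i) *\<^sub>v lam n"
    and eq_constr: "\<forall>n.
          vsum p (\<lambda>i. C i *\<^sub>v v i n) {..<S} + (\<alpha> / \<Delta>t) \<cdot>\<^sub>v vsum p (\<lambda>i. C i *\<^sub>v d i n) {..<S}
          = 0\<^sub>v p"
    and eq_update: "\<forall>n. \<forall>i<S.
          d i (Suc n) = d i n + \<Delta>t \<cdot>\<^sub>v ((1 - \<gamma>) \<cdot>\<^sub>v v i n + \<gamma> \<cdot>\<^sub>v v i (Suc n))"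
  shows "(\<forall>i<S. bounded_seq (v i))
       \<and> (\<forall>i<S. bounded_seq (\<lambda>n. d i (Suc n) - d i n))
       \<and> bounded_seq (\<lambda>n. lam (Suc n) - lam n)
       \<and> bounded_seq (\<lambda>n. vsum p (\<lambda>i. C i *\<^sub>v d i n) {..<S})"
proof -
  define r where "r = (1 - \<alpha> * (1 - \<gamma>)) / (1 + \<alpha> * \<gamma>)"
  have st': "1/2 \<le> \<gamma> \<or> (\<gamma> < 1/2 \<and> \<alpha> \<le> 1 / \<bar>\<gamma> - 1/2\<bar>)" using stab by auto
  note rf = r_facts[OF gamma alpha st', folded r_def]
  have den: "1 + \<alpha> * \<gamma> > 0" using alpha gamma by (simp add: add_pos_nonneg)
  have Mc: "\<And>i. i < S \<Longrightarrow> M i \<in> carrier_mat (m i) (m i)" using M_spd unfolding pos_def_mat_def by auto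
  have Kc: "\<And>i. i < S \<Longrightarrow> K i \<in> carrier_mat (m i) (m i)" using K_spsd unfolding pos_semidef_mat_def by auto
  have Cc: "\<And>i. i < S \<Longrightarrow> C i \<in> carrier_mat p (m i)" using C_dim by auto
  have Ctc: "\<And>i. i < S \<Longrightarrow> transpose_mat (C i) \<in> carrier_mat (m i) p" using C_dim by auto
  have dc: "\<And>i n. i < S \<Longrightarrow> d i n \<in> carrier_vec (m i)" using d_dim by auto
  have vc: "\<And>i n. i < S \<Longrightarrow> v i n \<in> carrier_vec (m i)" using v_dim by auto
  have lc: "\<And>n. lam n \<in> carrier_vec p" using lam_dim by auto
  have dd: "\<And>i n. i < S \<Longrightarrow> dim_vec (d i n) = m i" using d_dim by auto
  have dv: "\<And>i n. i < S \<Longrightarrow> dim_vec (v i n) = m i" using v_dim by auto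
  define g where "g n = vsum p (\<lambda>i. C i *\<^sub>v d i n) {..<S}" for n
  define h where "h n = vsum p (\<lambda>i. C i *\<^sub>v v i n) {..<S}" for n
  have gc: "g n \<in> carrier_vec p" for n unfolding g_def by (rule vsum_carrier)
  have hc: "h n \<in> carrier_vec p" for n unfolding h_def by (rule vsum_carrier)
  have dgp: "dim_vec (g n) = p" for n using gc[of n] by auto
  have hg: "h n $ k = - (\<alpha> / \<Delta>t) * g n $ k" if k: "k < p" for n k
  proof -
    have "(h n + (\<alpha> / \<Delta>t) \<cdot>\<^sub>v g n) $ k = 0\<^sub>v p $ k"
      using eq_constr unfolding g_def h_def by simp
    moreover have "dim_vec (g n) = p" "dim_vec (h n) = p" using gc[of n] hc[of n] by auto
    ultimately show ?thesis using k by (simp add: field_simps)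
  qed
  have cd: "(C i *\<^sub>v d i (Suc n)) $ k = (C i *\<^sub>v d i n) $ k
      + \<Delta>t * ((1 - \<gamma>) * (C i *\<^sub>v v i n) $ k + \<gamma> * (C i *\<^sub>v v i (Suc n)) $ k)"
    if i: "i < S" and k: "k < p" for i n k
    using eq_update i mv3[OF Cc[OF i] dc[OF i] vc[OF i] vc[OF i] k] by simp
  have gstep: "g (Suc n) $ k = r * g n $ k" if k: "k < p" for n k
  proof -
    have "g (Suc n) $ k = g n $ k + \<Delta>t * ((1 - \<gamma>) * h n $ k + \<gamma> * h (Suc n) $ k)"
      unfolding g_def h_def using k cd
      by (simp add: vsum_index sum.distrib sum_distrib_left distrib_left)
    also have "\<dots> = g n $ k + ((1 - \<gamma>) * (\<Delta>t * h n $ k) + \<gamma> * (\<Delta>t * h (Suc n) $ k))"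
      by (simp add: algebra_simps)
    also have "\<Delta>t * h n $ k = - \<alpha> * g n $ k" using hg[OF k, of n] dt by simp
    also have "\<Delta>t * h (Suc n) $ k = - \<alpha> * g (Suc n) $ k" using hg[OF k, of "Suc n"] dt by simp
    also have "g n $ k + ((1 - \<gamma>) * (- \<alpha> * g n $ k) + \<gamma> * (- \<alpha> * g (Suc n) $ k))
       = g n $ k - \<alpha> * (1 - \<gamma>) * g n $ k - \<alpha> * \<gamma> * g (Suc n) $ k" by (simp add: algebra_simps)
    finally have "(1 + \<alpha> * \<gamma>) * g (Suc n) $ k = (1 - \<alpha> * (1 - \<gamma>)) * g n $ k"
      by (simp add: algebra_simps)
    also have "(1 - \<alpha> * (1 - \<gamma>)) * g n $ k = ((1 + \<alpha> * \<gamma>) * r) * g n $ k" using rf(3) by simp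
    finally have "(1 + \<alpha> * \<gamma>) * g (Suc n) $ k = (1 + \<alpha> * \<gamma>) * (r * g n $ k)"
      by (simp add: algebra_simps)
    then show ?thesis using den by simp
  qed
  have gS: "g (Suc n) = r \<cdot>\<^sub>v g n" for n
    by (rule eq_vecI) (use gstep dgp in auto)
  have gb: "g n \<bullet> g n \<le> g 0 \<bullet> g 0" for n
  proof (induction n)
    case (Suc n)
    have "g (Suc n) \<bullet> g (Suc n) = r^2 * (g n \<bullet> g n)" unfolding gS by (rule smult_sprod_self[OF gc])
    also have "\<dots> \<le> 1 * (g n \<bullet> g n)"
    proof (rule mult_right_mono)
      have "\<bar>r\<bar>^2 \<le> 1^2" using rf(1) by (intro power_mono) auto
      then show "r^2 \<le> 1" by simp
    qed (rule self_sprod_ge0)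
    finally show ?case using Suc by simp
  qed simp
  have bound_g: "bounded_seq (\<lambda>n. vsum p (\<lambda>i. C i *\<^sub>v d i n) {..<S})"
  proof (rule bounded_seqI)
    fix n
    have "vnorm (g n) \<le> vnorm (g 0)" unfolding vnorm_def using gb by simp
    then show "vnorm (vsum p (\<lambda>i. C i *\<^sub>v d i n) {..<S}) \<le> vnorm (g 0)" unfolding g_def .
  qed

  define f where "f i n = v i (Suc n) - r \<cdot>\<^sub>v v i n" for i n
  define e where "e i n = d i (Suc n) - r \<cdot>\<^sub>v d i n" for i n
  define mu where "mu n = lam (Suc n) - r \<cdot>\<^sub>v lam n" for n
  have fc: "\<And>i n. i < S \<Longrightarrow> f i n \<in> carrier_vec (m i)" unfolding f_def using vc by simp
  have ec: "\<And>i n. i < S \<Longrightarrow> e i n \<in> carrier_vec (m i)" unfolding e_def using dc by simp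
  have muc: "\<And>n. mu n \<in> carrier_vec p" unfolding mu_def using lc by simp
  have H1: "M i *\<^sub>v f i n + K i *\<^sub>v e i n = transpose_mat (C i) *\<^sub>v mu n" if i: "i < S" for i n
  proof (rule eq_vecI)
    show "dim_vec (M i *\<^sub>v f i n + K i *\<^sub>v e i n) = dim_vec (transpose_mat (C i) *\<^sub>v mu n)"
      using Kc[OF i] Ctc[OF i] by simp
    fix j assume "j < dim_vec (transpose_mat (C i) *\<^sub>v mu n)"
    then have j: "j < m i" using Ctc[OF i] by simp
    have e1: "(M i *\<^sub>v v i (Suc n)) $ j + (K i *\<^sub>v d i (Suc n)) $ j = (transpose_mat (C i) *\<^sub>v lam (Suc n)) $ j"
      using arg_cong[OF eq_motion[rule_format, OF i, of "Suc n"], of "\<lambda>z. z $ j"] j Mc[OF i] Kc[OF i] by simp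
    have e0: "(M i *\<^sub>v v i n) $ j + (K i *\<^sub>v d i n) $ j = (transpose_mat (C i) *\<^sub>v lam n) $ j"
      using arg_cong[OF eq_motion[rule_format, OF i, of n], of "\<lambda>z. z $ j"] j Mc[OF i] Kc[OF i] by simp
    have "(M i *\<^sub>v f i n + K i *\<^sub>v e i n) $ j = ((M i *\<^sub>v v i (Suc n)) $ j + (K i *\<^sub>v d i (Suc n)) $ j)
         - r * ((M i *\<^sub>v v i n) $ j + (K i *\<^sub>v d i n) $ j)"
      unfolding f_def e_def using j Kc[OF i] Mc[OF i]
      by (simp add: mv2m[OF Mc[OF i] vc[OF i] vc[OF i] j] mv2m[OF Kc[OF i] dc[OF i] dc[OF i] j] algebra_simps
          del: index_mult_mat_vec)
    also have "\<dots> = (transpose_mat (C i) *\<^sub>v lam (Suc n)) $ j - r * (transpose_mat (C i) *\<^sub>v lam n) $ j"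
      by (simp only: e1 e0)
    also have "\<dots> = (transpose_mat (C i) *\<^sub>v mu n) $ j"
      unfolding mu_def by (rule mv2m[OF Ctc[OF i] lc lc j, symmetric])
    finally show "(M i *\<^sub>v f i n + K i *\<^sub>v e i n) $ j = (transpose_mat (C i) *\<^sub>v mu n) $ j" .
  qed
  have H2: "vsum p (\<lambda>i. C i *\<^sub>v f i n) {..<S} = 0\<^sub>v p" for n
  proof (rule eq_vecI)
    fix k assume "k < dim_vec (0\<^sub>v p)"
    then have k: "k < p" by simp
    have "vsum p (\<lambda>i. C i *\<^sub>v f i n) {..<S} $ k = (\<Sum>i<S. (C i *\<^sub>v v i (Suc n)) $ k - r * (C i *\<^sub>v v i n) $ k)"
      unfolding f_def using k by (simp add: vsum_index mv2m[OF Cc vc vc k])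
    also have "\<dots> = h (Suc n) $ k - r * h n $ k"
      unfolding h_def using k by (simp add: vsum_index sum_subtractf sum_distrib_left)
    also have "\<dots> = - (\<alpha> / \<Delta>t) * (g (Suc n) $ k - r * g n $ k)"
      using hg[OF k] by (simp add: algebra_simps)
    also have "\<dots> = 0" using gstep[OF k] by simp
    finally show "vsum p (\<lambda>i. C i *\<^sub>v f i n) {..<S} $ k = 0\<^sub>v p $ k" using k by simp
  qed (simp add: vsum_def)
  have dfi: "\<And>i k. i < S \<Longrightarrow> dim_vec (f i k) = m i" using fc by (meson carrier_vecD)
  have dei: "\<And>i k. i < S \<Longrightarrow> dim_vec (e i k) = m i" using ec by (meson carrier_vecD)
  have H3: "e i (Suc n) = e i n + \<Delta>t \<cdot>\<^sub>v ((1 - \<gamma>) \<cdot>\<^sub>v f i n + \<gamma> \<cdot>\<^sub>v f i (Suc n))" if i: "i < S" for i n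
  proof (rule eq_vecI)
    fix j assume "j < dim_vec (e i n + \<Delta>t \<cdot>\<^sub>v ((1 - \<gamma>) \<cdot>\<^sub>v f i n + \<gamma> \<cdot>\<^sub>v f i (Suc n)))"
    then have j: "j < m i" using dfi[OF i] by simp
    have u1: "d i (Suc (Suc n)) $ j = d i (Suc n) $ j + \<Delta>t * ((1 - \<gamma>) * v i (Suc n) $ j + \<gamma> * v i (Suc (Suc n)) $ j)"
    proof -
      have "d i (Suc (Suc n)) $ j = (d i (Suc n) + \<Delta>t \<cdot>\<^sub>v ((1 - \<gamma>) \<cdot>\<^sub>v v i (Suc n) + \<gamma> \<cdot>\<^sub>v v i (Suc (Suc n)))) $ j"
        using eq_update i by simp
      also have "\<dots> = d i (Suc n) $ j + \<Delta>t * ((1 - \<gamma>) * v i (Suc n) $ j + \<gamma> * v i (Suc (Suc n)) $ j)"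
        using j dv[OF i] by simp
      finally show ?thesis .
    qed
    have u0: "d i (Suc n) $ j = d i n $ j + \<Delta>t * ((1 - \<gamma>) * v i n $ j + \<gamma> * v i (Suc n) $ j)"
    proof -
      have "d i (Suc n) $ j = (d i n + \<Delta>t \<cdot>\<^sub>v ((1 - \<gamma>) \<cdot>\<^sub>v v i n + \<gamma> \<cdot>\<^sub>v v i (Suc n))) $ j"
        using eq_update i by simp
      also have "\<dots> = d i n $ j + \<Delta>t * ((1 - \<gamma>) * v i n $ j + \<gamma> * v i (Suc n) $ j)"
        using j dv[OF i] by simp
      finally show ?thesis .
    qed
    have "(e i n + \<Delta>t \<cdot>\<^sub>v ((1 - \<gamma>) \<cdot>\<^sub>v f i n + \<gamma> \<cdot>\<^sub>v f i (Suc n))) $ j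
       = (d i (Suc n) $ j - r * d i n $ j) + \<Delta>t * ((1 - \<gamma>) * (v i (Suc n) $ j - r * v i n $ j)
            + \<gamma> * (v i (Suc (Suc n)) $ j - r * v i (Suc n) $ j))"
      unfolding e_def f_def using j dv[OF i] dd[OF i] by simp
    also have "\<dots> = d i (Suc (Suc n)) $ j - r * d i (Suc n) $ j"
      unfolding u1 u0 by (simp add: algebra_simps)
    also have "\<dots> = e i (Suc n) $ j" unfolding e_def using j dd[OF i] by simp
    finally show "e i (Suc n) $ j = (e i n + \<Delta>t \<cdot>\<^sub>v ((1 - \<gamma>) \<cdot>\<^sub>v f i n + \<gamma> \<cdot>\<^sub>v f i (Suc n))) $ j" by simp
  qed (use dei[OF i] dfi[OF i] in simp)
  have orth: "(\<Sum>i<S. w \<bullet> (C i *\<^sub>v f i n)) = 0" if w: "w \<in> carrier_vec p" for w n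
  proof -
    have "(\<Sum>i<S. w \<bullet> (C i *\<^sub>v f i n)) = w \<bullet> vsum p (\<lambda>i. C i *\<^sub>v f i n) {..<S}"
    proof (rule vsum_sprod[symmetric, OF w])
      show "\<forall>i\<in>{..<S}. C i *\<^sub>v f i n \<in> carrier_vec p"
        using mult_mat_vec_carrier[OF Cc fc] by blast
    qed simp
    also have "\<dots> = 0" unfolding H2 using w by simp
    finally show ?thesis .
  qed

  have Mnn: "x \<bullet> (M i *\<^sub>v x) \<ge> 0" if i: "i < S" and x: "x \<in> carrier_vec (m i)" for i x
  proof (cases "x = 0\<^sub>v (m i)")
    case True then show ?thesis using Mc[OF i] by (simp add: scalar_prod_def)
  next
    case False then show ?thesis using M_spd i x unfolding pos_def_mat_def by (auto intro: less_imp_le)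
  qed
  have Kbound: "\<Delta>t * (x \<bullet> (K i *\<^sub>v x)) \<le> (2 / (1 - 2*\<gamma>) - \<alpha>) * (x \<bullet> (M i *\<^sub>v x))"
    if g: "\<gamma> < 1/2" and i: "i < S" and x: "x \<in> carrier_vec (m i)" for i x
  proof -
    have om: "\<Delta>t * omega_max (K i) (M i) \<le> 2 / (1 - 2*\<gamma>) - \<alpha>" using stab g i by auto
    have "x \<bullet> (K i *\<^sub>v x) \<le> omega_max (K i) (M i) * (x \<bullet> (M i *\<^sub>v x))"
      using omega_max_bound M_spd K_spsd i x by blast
    then have "\<Delta>t * (x \<bullet> (K i *\<^sub>v x)) \<le> \<Delta>t * (omega_max (K i) (M i) * (x \<bullet> (M i *\<^sub>v x)))"
      using dt by (intro mult_left_mono) auto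
    also have "\<dots> = (\<Delta>t * omega_max (K i) (M i)) * (x \<bullet> (M i *\<^sub>v x))" by simp
    also have "\<dots> \<le> (2 / (1 - 2*\<gamma>) - \<alpha>) * (x \<bullet> (M i *\<^sub>v x))"
      using om Mnn[OF i x] by (intro mult_right_mono) auto
    finally show ?thesis .
  qed
  define E where "E n = (\<Sum>i<S. f i n \<bullet> (M i *\<^sub>v f i n))" for n
  have Estep: "E (Suc n) \<le> E n" for n
  proof -
    define qa where "qa i = mu (Suc n) \<bullet> (C i *\<^sub>v f i n) - mu n \<bullet> (C i *\<^sub>v f i n)" for i
    define qb where "qb i = mu (Suc n) \<bullet> (C i *\<^sub>v f i (Suc n)) - mu n \<bullet> (C i *\<^sub>v f i (Suc n))" for i
    define Dq where "Dq i = ((-1) \<cdot>\<^sub>v f i n + 1 \<cdot>\<^sub>v f i (Suc n)) \<bullet> (M i *\<^sub>v ((-1) \<cdot>\<^sub>v f i n + 1 \<cdot>\<^sub>v f i (Suc n)))" for i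
    define aq where "aq i = ((1 - \<gamma>) \<cdot>\<^sub>v f i n + \<gamma> \<cdot>\<^sub>v f i (Suc n)) \<bullet> (K i *\<^sub>v ((1 - \<gamma>) \<cdot>\<^sub>v f i n + \<gamma> \<cdot>\<^sub>v f i (Suc n)))" for i
    define cq where "cq i = ((-1) \<cdot>\<^sub>v f i n + 1 \<cdot>\<^sub>v f i (Suc n)) \<bullet> (K i *\<^sub>v ((1 - \<gamma>) \<cdot>\<^sub>v f i n + \<gamma> \<cdot>\<^sub>v f i (Suc n)))" for i
    define bq where "bq i = ((-1) \<cdot>\<^sub>v f i n + 1 \<cdot>\<^sub>v f i (Suc n)) \<bullet> (K i *\<^sub>v ((-1) \<cdot>\<^sub>v f i n + 1 \<cdot>\<^sub>v f i (Suc n)))" for i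
    define Ei where "Ei i = f i (Suc n) \<bullet> (M i *\<^sub>v f i (Suc n)) - f i n \<bullet> (M i *\<^sub>v f i n)" for i
    have BF: "Ei i = 2 * ((1 - \<gamma>) * qa i + \<gamma> * qb i - \<Delta>t * aq i) + (1 - 2*\<gamma>) * Dq i
      \<and> Dq i = qb i - qa i - \<Delta>t * cq i \<and> aq i \<ge> 0 \<and> Dq i \<ge> 0
      \<and> (\<forall>t>0. - 2 * cq i \<le> t * bq i + aq i / t)" if i: "i < S" for i
    proof -
      note B = block_facts[OF M_spd[rule_format, OF i] K_spsd[rule_format, OF i] Cc[OF i]
          fc[OF i, of n] fc[OF i, of "Suc n"] ec[OF i, of n] ec[OF i, of "Suc n"] muc[of n] muc[of "Suc n"]
          H1[OF i, of n] H1[OF i, of "Suc n"] H3[OF i, of n]]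
      show ?thesis unfolding Ei_def qa_def qb_def Dq_def aq_def cq_def bq_def using B by blast
    qed
    have sqa: "sum qa {..<S} = 0"
      unfolding qa_def using orth[OF muc, of "Suc n" n] orth[OF muc, of n n] by (simp add: sum_subtractf)
    have sqb: "sum qb {..<S} = 0"
      unfolding qb_def using orth[OF muc, of "Suc n" "Suc n"] orth[OF muc, of n "Suc n"] by (simp add: sum_subtractf)
    have st2: "1/2 \<le> \<gamma> \<or> (\<gamma> < 1/2 \<and> (\<forall>i\<in>{..<S}. \<Delta>t * bq i \<le> (2 / (1 - 2*\<gamma>) - \<alpha>) * Dq i))"
    proof (cases "1/2 \<le> \<gamma>")
      case False
      then have g: "\<gamma> < 1/2" by simp
      have "\<forall>i\<in>{..<S}. \<Delta>t * bq i \<le> (2 / (1 - 2*\<gamma>) - \<alpha>) * Dq i"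
      proof
        fix i assume "i \<in> {..<S}"
        then have i: "i < S" by simp
        have x: "(-1) \<cdot>\<^sub>v f i n + 1 \<cdot>\<^sub>v f i (Suc n) \<in> carrier_vec (m i)" using fc[OF i] by simp
        show "\<Delta>t * bq i \<le> (2 / (1 - 2*\<gamma>) - \<alpha>) * Dq i"
          unfolding bq_def Dq_def by (rule Kbound[OF g i x])
      qed
      then show ?thesis using g by simp
    qed simp
    have F1: "\<forall>i\<in>{..<S}. Ei i = 2 * ((1 - \<gamma>) * qa i + \<gamma> * qb i - \<Delta>t * aq i) + (1 - 2*\<gamma>) * Dq i"
      using BF by blast
    have F2: "\<forall>i\<in>{..<S}. Dq i = qb i - qa i - \<Delta>t * cq i" using BF by blast
    have F3: "\<forall>i\<in>{..<S}. aq i \<ge> 0 \<and> Dq i \<ge> 0" using BF by blast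
    have F4: "\<forall>i\<in>{..<S}. \<forall>t>0. - 2 * cq i \<le> t * bq i + aq i / t" using BF by blast
    have "sum Ei {..<S} \<le> 0"
      by (rule energy_sum[OF _ F1 F2 F3 F4 sqa sqb dt alpha st2]) simp
    then show ?thesis unfolding E_def Ei_def by (simp add: sum_subtractf)
  qed
  have Emono: "E n \<le> E 0" for n
    by (induction n) (use Estep order_trans in auto)

  have E0nn: "E 0 \<ge> 0" unfolding E_def using Mnn fc by (intro sum_nonneg) auto
  have E0zero: "E 0 = 0" if rm: "r = -1"
  proof -
    have g: "\<gamma> < 1/2" and aeq: "\<alpha> = 2 / (1 - 2*\<gamma>)" using rf(2) rm by auto
    have Kz: "K i *\<^sub>v x = 0\<^sub>v (m i)" if i: "i < S" and x: "x \<in> carrier_vec (m i)" for i x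
    proof -
      have Kx0: "y \<bullet> (K i *\<^sub>v y) = 0" if y: "y \<in> carrier_vec (m i)" for y
      proof -
        have "\<Delta>t * (y \<bullet> (K i *\<^sub>v y)) \<le> 0" using Kbound[OF g i y] aeq by simp
        then have "y \<bullet> (K i *\<^sub>v y) \<le> 0" using dt by (simp add: mult_le_0_iff)
        moreover have "y \<bullet> (K i *\<^sub>v y) \<ge> 0" using K_spsd i y unfolding pos_semidef_mat_def by auto
        ultimately show ?thesis by simp
      qed
      have Ks: "K i \<in> carrier_mat (m i) (m i)" "sym_mat (K i)" using K_spsd i unfolding pos_semidef_mat_def by auto
      define y where "y = K i *\<^sub>v x"
      have y: "y \<in> carrier_vec (m i)" unfolding y_def using Ks x by simp
      have "(x + 1 \<cdot>\<^sub>v y) \<bullet> (K i *\<^sub>v (x + 1 \<cdot>\<^sub>v y)) = x \<bullet> (K i *\<^sub>v x) + 2 * 1 * (y \<bullet> (K i *\<^sub>v x)) + 1^2 * (y \<bullet> (K i *\<^sub>v y))"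
        by (rule quad_expand[OF Ks x y])
      then have "y \<bullet> (K i *\<^sub>v x) = 0" using Kx0[OF x] Kx0[OF y] Kx0[of "x + 1 \<cdot>\<^sub>v y"] x y by simp
      then have "y \<bullet> y = 0" unfolding y_def .
      then show ?thesis using self_sprod_eq0[OF y] unfolding y_def by simp
    qed
    have "f i 0 \<bullet> (M i *\<^sub>v f i 0) = mu 0 \<bullet> (C i *\<^sub>v f i 0)" if i: "i < S" for i
    proof -
      have "M i *\<^sub>v f i 0 = transpose_mat (C i) *\<^sub>v mu 0"
        using H1[OF i, of 0] Kz[OF i ec[OF i, of 0]] Mc[OF i] fc[OF i, of 0] by simp
      then have "f i 0 \<bullet> (M i *\<^sub>v f i 0) = f i 0 \<bullet> (transpose_mat (C i) *\<^sub>v mu 0)" by simp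
      also have "\<dots> = (transpose_mat (C i) *\<^sub>v mu 0) \<bullet> f i 0"
        using fc[OF i, of 0] Ctc[OF i] muc[of 0] by (intro comm_scalar_prod[of _ "m i"]) auto
      also have "\<dots> = mu 0 \<bullet> (C i *\<^sub>v f i 0)" by (rule transpose_sprod[OF Cc[OF i] fc[OF i] muc])
      finally show ?thesis .
    qed
    then have "E 0 = (\<Sum>i<S. mu 0 \<bullet> (C i *\<^sub>v f i 0))" unfolding E_def by simp
    also have "\<dots> = 0" by (rule orth[OF muc])
    finally show ?thesis .
  qed
  have vb: "\<exists>B. \<forall>n. vnorm (v i n) \<le> B" if i: "i < S" for i
  proof -
    obtain c where c: "c > 0" and cM: "\<forall>x\<in>carrier_vec (m i). c * (x \<bullet> x) \<le> x \<bullet> (M i *\<^sub>v x)"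
      using pd_coercive M_spd i by blast
    define Bf where "Bf = sqrt (E 0 / c)"
    have fb: "vnorm (f i n) \<le> Bf" for n
    proof -
      have "c * (f i n \<bullet> f i n) \<le> f i n \<bullet> (M i *\<^sub>v f i n)" using cM fc[OF i] by blast
      also have "\<dots> \<le> E n" unfolding E_def using Mnn fc i
        by (intro member_le_sum[of i "{..<S}" "\<lambda>i. f i n \<bullet> (M i *\<^sub>v f i n)"]) auto
      also have "\<dots> \<le> E 0" by (rule Emono)
      finally have "f i n \<bullet> f i n \<le> E 0 / c" using c by (simp add: field_simps)
      then show ?thesis unfolding vnorm_def Bf_def by simp
    qed
    have vrec: "v i (Suc n) = r \<cdot>\<^sub>v v i n + f i n" for n
      unfolding f_def by (rule eq_vecI) (use dv[OF i] in auto)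
    have vstep: "vnorm (v i (Suc n)) \<le> \<bar>r\<bar> * vnorm (v i n) + Bf" for n
    proof -
      have "vnorm (v i (Suc n)) \<le> vnorm (r \<cdot>\<^sub>v v i n) + vnorm (f i n)"
        unfolding vrec by (rule vnorm_add) (use vc[OF i] fc[OF i] in auto)
      also have "\<dots> = \<bar>r\<bar> * vnorm (v i n) + vnorm (f i n)" using vnorm_smult[OF vc[OF i]] by simp
      finally show ?thesis using fb[of n] by simp
    qed
    from rf(2) show ?thesis
    proof
      assume r1: "\<bar>r\<bar> < 1"
      define B where "B = max (vnorm (v i 0)) (Bf / (1 - \<bar>r\<bar>))"
      have "vnorm (v i n) \<le> B" for n
      proof (induction n)
        case 0 show ?case unfolding B_def by simp
      next
        case (Suc n)
        have "Bf \<le> (1 - \<bar>r\<bar>) * B" unfolding B_def using r1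
          by (simp add: max_def field_simps split: if_splits)
        then have "\<bar>r\<bar> * B + Bf \<le> B" by (simp add: algebra_simps)
        moreover have "\<bar>r\<bar> * vnorm (v i n) \<le> \<bar>r\<bar> * B" using Suc by (simp add: mult_left_mono)
        ultimately show ?case using vstep[of n] by linarith
      qed
      then show ?thesis by blast
    next
      assume "r = -1 \<and> \<gamma> < 1/2 \<and> \<alpha> = 2 / (1 - 2*\<gamma>)"
      then have rm: "r = -1" by simp
      have "Bf = 0" unfolding Bf_def using E0zero[OF rm] by simp
      then have "vnorm (v i (Suc n)) \<le> vnorm (v i n)" for n using vstep[of n] rm by simp
      then have "vnorm (v i n) \<le> vnorm (v i 0)" for n by (induction n) (auto intro: order_trans)
      then show ?thesis by blast
    qed
  qed

  have "\<forall>i. \<exists>B. i < S \<longrightarrow> (\<forall>n. vnorm (v i n) \<le> B)" using vb by blast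
  then obtain Vb where Vb: "\<And>i n. i < S \<Longrightarrow> vnorm (v i n) \<le> Vb i" by (metis choice)
  have Vb0: "Vb i \<ge> 0" if "i < S" for i using Vb[OF that, of 0] vnorm_nonneg[of "v i 0"] by linarith
  have bound_v: "\<forall>i<S. bounded_seq (v i)" using Vb by (auto intro: bounded_seqI)
  have dstep: "d i (Suc n) - d i n = \<Delta>t \<cdot>\<^sub>v ((1 - \<gamma>) \<cdot>\<^sub>v v i n + \<gamma> \<cdot>\<^sub>v v i (Suc n))" if i: "i < S" for i n
    using eq_update i dd[OF i] dv[OF i] by (intro eq_vecI) auto
  have dbound: "vnorm (d i (Suc n) - d i n) \<le> \<Delta>t * Vb i" if i: "i < S" for i n
  proof -
    have w: "(1 - \<gamma>) \<cdot>\<^sub>v v i n + \<gamma> \<cdot>\<^sub>v v i (Suc n) \<in> carrier_vec (m i)" using vc[OF i] by simp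
    have "vnorm ((1 - \<gamma>) \<cdot>\<^sub>v v i n + \<gamma> \<cdot>\<^sub>v v i (Suc n)) \<le> vnorm ((1 - \<gamma>) \<cdot>\<^sub>v v i n) + vnorm (\<gamma> \<cdot>\<^sub>v v i (Suc n))"
      by (rule vnorm_add) (use vc[OF i] in auto)
    also have "\<dots> = (1 - \<gamma>) * vnorm (v i n) + \<gamma> * vnorm (v i (Suc n))"
      using vnorm_smult[OF vc[OF i]] gamma by simp
    also have "\<dots> \<le> (1 - \<gamma>) * Vb i + \<gamma> * Vb i"
      using Vb[OF i] gamma by (intro add_mono mult_left_mono) auto
    finally have h: "vnorm ((1 - \<gamma>) \<cdot>\<^sub>v v i n + \<gamma> \<cdot>\<^sub>v v i (Suc n)) \<le> Vb i" by (simp add: algebra_simps)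
    have "vnorm (d i (Suc n) - d i n) = \<Delta>t * vnorm ((1 - \<gamma>) \<cdot>\<^sub>v v i n + \<gamma> \<cdot>\<^sub>v v i (Suc n))"
      unfolding dstep[OF i] using vnorm_smult[OF w] dt by simp
    also have "\<dots> \<le> \<Delta>t * Vb i" using h dt by (intro mult_left_mono) auto
    finally show ?thesis .
  qed
  have bound_d: "\<forall>i<S. bounded_seq (\<lambda>n. d i (Suc n) - d i n)" using dbound by (auto intro: bounded_seqI)
  obtain c3 where c3: "c3 > 0" and c3b: "\<forall>x\<in>carrier_vec p. c3 * (x \<bullet> x) \<le>
      (\<Sum>i<S. (transpose_mat (C i) *\<^sub>v x) \<bullet> (transpose_mat (C i) *\<^sub>v x))"
    using block_row_coercive[OF C_dim C_rank] by blast
  define Z where "Z i = frob (M i) * (2 * Vb i) + frob (K i) * (\<Delta>t * Vb i)" for i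
  have zeq: "transpose_mat (C i) *\<^sub>v (lam (Suc n) - lam n) = M i *\<^sub>v (v i (Suc n) - v i n) + K i *\<^sub>v (d i (Suc n) - d i n)"
    if i: "i < S" for i n
  proof (rule eq_vecI)
    fix j assume "j < dim_vec (M i *\<^sub>v (v i (Suc n) - v i n) + K i *\<^sub>v (d i (Suc n) - d i n))"
    then have j: "j < m i" using Kc[OF i] by simp
    have e1: "(M i *\<^sub>v v i (Suc n)) $ j + (K i *\<^sub>v d i (Suc n)) $ j = (transpose_mat (C i) *\<^sub>v lam (Suc n)) $ j"
      using arg_cong[OF eq_motion[rule_format, OF i, of "Suc n"], of "\<lambda>z. z $ j"] j Mc[OF i] Kc[OF i] by simp
    have e0: "(M i *\<^sub>v v i n) $ j + (K i *\<^sub>v d i n) $ j = (transpose_mat (C i) *\<^sub>v lam n) $ j"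
      using arg_cong[OF eq_motion[rule_format, OF i, of n], of "\<lambda>z. z $ j"] j Mc[OF i] Kc[OF i] by simp
    have "(transpose_mat (C i) *\<^sub>v (lam (Suc n) - lam n)) $ j = (transpose_mat (C i) *\<^sub>v lam (Suc n)) $ j - (transpose_mat (C i) *\<^sub>v lam n) $ j"
      by (rule mv2d[OF Ctc[OF i] lc lc j])
    also have "\<dots> = ((M i *\<^sub>v v i (Suc n)) $ j - (M i *\<^sub>v v i n) $ j) + ((K i *\<^sub>v d i (Suc n)) $ j - (K i *\<^sub>v d i n) $ j)"
      unfolding e1[symmetric] e0[symmetric] by simp
    also have "\<dots> = (M i *\<^sub>v (v i (Suc n) - v i n) + K i *\<^sub>v (d i (Suc n) - d i n)) $ j"
      using j Kc[OF i] by (simp add: mv2d[OF Mc[OF i] vc[OF i] vc[OF i] j] mv2d[OF Kc[OF i] dc[OF i] dc[OF i] j]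
          del: index_mult_mat_vec)
    finally show "(transpose_mat (C i) *\<^sub>v (lam (Suc n) - lam n)) $ j = (M i *\<^sub>v (v i (Suc n) - v i n) + K i *\<^sub>v (d i (Suc n) - d i n)) $ j" .
  qed (use Ctc[OF i] Kc[OF i] in simp)
  have zb: "vnorm (transpose_mat (C i) *\<^sub>v (lam (Suc n) - lam n)) \<le> Z i" if i: "i < S" for i n
  proof -
    have vd: "v i (Suc n) - v i n \<in> carrier_vec (m i)" "d i (Suc n) - d i n \<in> carrier_vec (m i)"
      using vc[OF i] dc[OF i] by auto
    have "vnorm (transpose_mat (C i) *\<^sub>v (lam (Suc n) - lam n))
        \<le> vnorm (M i *\<^sub>v (v i (Suc n) - v i n)) + vnorm (K i *\<^sub>v (d i (Suc n) - d i n))"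
      unfolding zeq[OF i] by (rule vnorm_add[OF mult_mat_vec_carrier[OF Mc[OF i] vd(1)] mult_mat_vec_carrier[OF Kc[OF i] vd(2)]])
    also have "\<dots> \<le> frob (M i) * vnorm (v i (Suc n) - v i n) + frob (K i) * vnorm (d i (Suc n) - d i n)"
      by (intro add_mono vnorm_mv[OF Mc[OF i] vd(1)] vnorm_mv[OF Kc[OF i] vd(2)])
    also have "\<dots> \<le> Z i" unfolding Z_def
    proof (intro add_mono mult_left_mono frob_nonneg)
      have "vnorm (v i (Suc n) - v i n) \<le> vnorm (v i (Suc n)) + vnorm (v i n)"
        by (rule vnorm_diff) (use vc[OF i] in auto)
      then show "vnorm (v i (Suc n) - v i n) \<le> 2 * Vb i" using Vb[OF i, of n] Vb[OF i, of "Suc n"] by linarith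
      show "vnorm (d i (Suc n) - d i n) \<le> \<Delta>t * Vb i" by (rule dbound[OF i])
    qed
    finally show ?thesis .
  qed
  have bound_l: "bounded_seq (\<lambda>n. lam (Suc n) - lam n)"
  proof (rule bounded_seqI)
    fix n
    let ?x = "lam (Suc n) - lam n"
    have x: "?x \<in> carrier_vec p" using lc by simp
    have "c3 * (?x \<bullet> ?x) \<le> (\<Sum>i<S. (transpose_mat (C i) *\<^sub>v ?x) \<bullet> (transpose_mat (C i) *\<^sub>v ?x))"
      using c3b x by blast
    also have "\<dots> \<le> (\<Sum>i<S. (Z i)^2)"
    proof (intro sum_mono)
      fix i assume "i \<in> {..<S}"
      then have i: "i < S" by simp
      have "(transpose_mat (C i) *\<^sub>v ?x) \<bullet> (transpose_mat (C i) *\<^sub>v ?x) = (vnorm (transpose_mat (C i) *\<^sub>v ?x))^2"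
        by (simp add: vnorm_sq)
      also have "\<dots> \<le> (Z i)^2" using zb[OF i, of n] vnorm_nonneg by (intro power_mono) auto
      finally show "(transpose_mat (C i) *\<^sub>v ?x) \<bullet> (transpose_mat (C i) *\<^sub>v ?x) \<le> (Z i)^2" .
    qed
    finally have "?x \<bullet> ?x \<le> (\<Sum>i<S. (Z i)^2) / c3" using c3 by (simp add: field_simps)
    then show "vnorm ?x \<le> sqrt ((\<Sum>i<S. (Z i)^2) / c3)" unfolding vnorm_def by simp
  qed
  show ?thesis using bound_v bound_d bound_l bound_g by blast
qed


end
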